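(* (i) For all integers $n,m\geq 2$, $t(nm)\geq n\,t(m)+t(n)$. (ii) For all primes $p,q\geq 3$, $t(pq)\geq pq-5$, and moreover $t(pq)\geq pq-3$ if $q-1$ divides $p-1$.
   Context: For a positive integer $n$ let $S(\mathbb{Z}_n)$ be the set of bijections $\mathbb{Z}_n\to\mathbb{Z}_n$. For $\pi\in S(\mathbb{Z}_n)$, $\mathrm{cyc}(\pi)$ is the number of cycles (including fixed points) of $\pi$ and $t(\pi)=n-\mathrm{cyc}(\pi)$. Let $[\pi]=\{x\mapsto \pi(x+b): b\in\mathbb{Z}_n\}$, $t([\pi])=\min_{\sigma\in[\pi]}t(\sigma)$, and $t(n)=\max_{\pi\in S(\mathbb{Z}_n)}t([\pi])$. *)

theory Defs
  imports "HOL-Combinatorics.Permutations" "HOL-Computational_Algebra.Primes"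
begin

text \<open>Z_n is modelled as {0..<n} with arithmetic mod n; a bijection Z_n -> Z_n is a
  function that permutes {..<n} (identity outside).\<close>

definition cyc :: "nat \<Rightarrow> (nat \<Rightarrow> nat) \<Rightarrow> nat" where
  "cyc n \<sigma> = card ((\<lambda>x. {(\<sigma> ^^ k) x | k. True}) ` {..<n})"

definition tperm :: "nat \<Rightarrow> (nat \<Rightarrow> nat) \<Rightarrow> nat" where
  "tperm n \<sigma> = n - cyc n \<sigma>"

definition shiftp :: "nat \<Rightarrow> (nat \<Rightarrow> nat) \<Rightarrow> nat \<Rightarrow> (nat \<Rightarrow> nat)" where
  "shiftp n \<pi> b = (\<lambda>x. if x < n then \<pi> ((x + b) mod n) else x)"

definition tclass :: "nat \<Rightarrow> (nat \<Rightarrow> nat) \<Rightarrow> nat" where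
  "tclass n \<pi> = Min {tperm n (shiftp n \<pi> b) | b. b < n}"

definition tmax :: "nat \<Rightarrow> nat" where
  "tmax n = Max {tclass n \<pi> | \<pi>. \<pi> permutes {..<n}}"

end

theory Submission
  imports Defs "HOL-Number_Theory.Number_Theory"
begin

definition orb :: "(nat \<Rightarrow> nat) \<Rightarrow> nat \<Rightarrow> nat set" where
  "orb f x = {(f ^^ k) x | k. True}"

lemma cyc_orb: "cyc n f = card (orb f ` {..<n})"
  unfolding cyc_def orb_def by simp

lemma cyc_le: "cyc n f \<le> n"
  unfolding cyc_orb by (metis card_image_le card_lessThan finite_lessThan)

lemma funpow_period:
  assumes "f permutes S" "finite S" "x \<in> S"
  shows "\<exists>P>0. (f ^^ P) x = x"
proof -
  have "\<not> inj_on (\<lambda>k. (f ^^ k) x) {..card S}"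
  proof
    assume inj: "inj_on (\<lambda>k. (f ^^ k) x) {..card S}"
    have "(\<lambda>k. (f ^^ k) x) ` {..card S} \<subseteq> S"
      using permutes_in_funpow_image[OF assms(1,3)] by auto
    hence "card ((\<lambda>k. (f ^^ k) x) ` {..card S}) \<le> card S"
      using assms(2) by (simp add: card_mono)
    with card_image[OF inj] show False by simp
  qed
  then obtain i j where ij: "i \<le> card S" "j \<le> card S" "i \<noteq> j" "(f ^^ i) x = (f ^^ j) x"
    unfolding inj_on_def by auto
  { fix i j assume "i < j" "(f ^^ i) x = (f ^^ j) x"
    then have "(f ^^ i) ((f ^^ (j - i)) x) = (f ^^ i) x"
      by (metis add_diff_inverse_nat funpow_add less_imp_not_less o_apply)
    moreover have "inj (f ^^ i)" using permutes_inj[OF assms(1)] by (rule inj_fn)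
    ultimately have "(f ^^ (j - i)) x = x" by (meson injD)
    hence "\<exists>P>0. (f ^^ P) x = x" using \<open>i < j\<close> by (intro exI[of _ "j - i"]) auto }
  with ij show ?thesis by (metis linorder_neqE_nat)
qed

lemma funpow_period_mult:
  assumes "(f ^^ P) x = x" shows "(f ^^ (P * k)) x = x"
proof (induction k)
  case 0 then show ?case by simp
next
  case (Suc k)
  have "(f ^^ (P * Suc k)) x = (f ^^ P) ((f ^^ (P * k)) x)"
    by (simp add: funpow_add)
  then show ?case using assms Suc by simp
qed

lemma orbit_sym:
  assumes "f permutes S" "finite S" "x \<in> S"
  shows "\<exists>j. (f ^^ j) ((f ^^ k) x) = x"
proof -
  obtain P where P: "P > 0" "(f ^^ P) x = x" using funpow_period[OF assms] by blast
  have "(f ^^ (P * k - k)) ((f ^^ k) x) = (f ^^ (P * k - k + k)) x"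
    by (simp add: funpow_add)
  also have "P * k - k + k = P * k" using P(1)
    by (metis One_nat_def le_add_diff_inverse2 mult_le_mono1 mult_1 Suc_leI)
  finally show ?thesis using funpow_period_mult[OF P(2)] by metis
qed

lemma orb_eq:
  assumes "f permutes S" "finite S" "x \<in> S"
  shows "orb f ((f ^^ k) x) = orb f x"
proof -
  obtain j where j: "(f ^^ j) ((f ^^ k) x) = x" using orbit_sym[OF assms] by blast
  show ?thesis
  proof
    show "orb f ((f ^^ k) x) \<subseteq> orb f x"
      unfolding orb_def by (auto simp flip: funpow_add[unfolded o_def] simp: funpow_add)
         (metis comp_apply funpow_add)
    show "orb f x \<subseteq> orb f ((f ^^ k) x)"
    proof
      fix y assume "y \<in> orb f x"
      then obtain i where "y = (f ^^ i) x" unfolding orb_def by auto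
      hence "y = (f ^^ (i + j)) ((f ^^ k) x)" using j by (simp add: funpow_add)
      thus "y \<in> orb f ((f ^^ k) x)" unfolding orb_def by auto
    qed
  qed
qed

lemma cyc_cover:
  assumes "f permutes {..<n}" "finite R" "\<And>x. x < n \<Longrightarrow> \<exists>k. (f ^^ k) x \<in> R"
  shows "cyc n f \<le> card R"
proof -
  have "orb f ` {..<n} \<subseteq> orb f ` R"
  proof
    fix Ob assume "Ob \<in> orb f ` {..<n}"
    then obtain x where x: "x < n" "Ob = orb f x" by auto
    obtain k where "(f ^^ k) x \<in> R" using assms(3) x(1) by blast
    moreover have "orb f ((f ^^ k) x) = orb f x" using orb_eq[OF assms(1)] x(1) by auto
    ultimately show "Ob \<in> orb f ` R" using x by auto
  qed
  hence "card (orb f ` {..<n}) \<le> card (orb f ` R)" using assms(2) by (simp add: card_mono)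
  also have "\<dots> \<le> card R" using assms(2) by (rule card_image_le)
  finally show ?thesis unfolding cyc_orb .
qed

lemma cyc_cover2:
  assumes "f permutes {..<n}" "finite R" "R \<subseteq> {..<n}"
    "\<And>x. x < n \<Longrightarrow> \<exists>r\<in>R. \<exists>k. (f ^^ k) r = x"
  shows "cyc n f \<le> card R"
proof (rule cyc_cover[OF assms(1,2)])
  fix x assume "x < n"
  then obtain r k where r: "r \<in> R" "(f ^^ k) r = x" using assms(4) by blast
  then obtain j where "(f ^^ j) ((f ^^ k) r) = r" using orbit_sym[OF assms(1)] assms(3) by blast
  thus "\<exists>k. (f ^^ k) x \<in> R" using r by auto
qed

lemma reps_exist:
  assumes "f permutes {..<n}"
  shows "\<exists>R. R \<subseteq> {..<n} \<and> card R \<le> cyc n f \<and> (\<forall>x<n. \<exists>k. (f ^^ k) x \<in> R)"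
proof -
  define rep where "rep Ob = (SOME r. r < n \<and> orb f r = Ob)" for Ob
  define R where "R = rep ` (orb f ` {..<n})"
  have rep: "rep (orb f x) < n \<and> orb f (rep (orb f x)) = orb f x" if "x < n" for x
    unfolding rep_def by (rule someI[of _ x]) (use that in auto)
  have "R \<subseteq> {..<n}" unfolding R_def using rep by auto
  moreover have "card R \<le> cyc n f" unfolding R_def cyc_orb by (rule card_image_le) simp
  moreover have "\<exists>k. (f ^^ k) x \<in> R" if "x < n" for x
  proof -
    have "rep (orb f x) \<in> orb f x" using rep[OF that] unfolding orb_def
      by (metis (mono_tags, lifting) funpow_0 mem_Collect_eq)
    then obtain k where "(f ^^ k) x = rep (orb f x)" unfolding orb_def by auto
    thus ?thesis unfolding R_def using that by auto
  qed
  ultimately show ?thesis by blast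
qed

lemma shiftp_permutes:
  assumes "\<pi> permutes {..<n}" "0 < n"
  shows "shiftp n \<pi> b permutes {..<n}"
proof (rule inj_imp_permutes)
  show "inj_on (shiftp n \<pi> b) {..<n}"
  proof
    fix x y assume xy: "x \<in> {..<n}" "y \<in> {..<n}" "shiftp n \<pi> b x = shiftp n \<pi> b y"
    hence "\<pi> ((x + b) mod n) = \<pi> ((y + b) mod n)" unfolding shiftp_def by auto
    hence "(x + b) mod n = (y + b) mod n" using permutes_inj[OF assms(1)] by (meson injD)
    hence "[x = y] (mod n)" by (metis cong_add_rcancel_nat cong_def)
    thus "x = y" using xy by (simp add: cong_def)
  qed
  show "shiftp n \<pi> b x \<in> {..<n}" if "x \<in> {..<n}" for x
    using that assms permutes_in_image[OF assms(1)] unfolding shiftp_def by auto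
  show "shiftp n \<pi> b x = x" if "x \<notin> {..<n}" for x using that unfolding shiftp_def by auto
qed simp

lemma tmax_ge:
  assumes "0 < N" "\<pi> permutes {..<N}" "\<And>b. b < N \<Longrightarrow> cyc N (shiftp N \<pi> b) \<le> K"
  shows "N - K \<le> tmax N"
proof -
  have eq: "{tperm N (shiftp N \<pi> b) | b. b < N} = (\<lambda>b. tperm N (shiftp N \<pi> b)) ` {..<N}" by auto
  have "N - K \<le> tclass N \<pi>" unfolding tclass_def eq
    using assms by (subst Min_ge_iff) (auto simp: tperm_def intro!: diff_le_mono2)
  also have "tclass N \<pi> \<le> tmax N" unfolding tmax_def
  proof (rule Max_ge)
    have "{tclass N \<pi> |\<pi>. \<pi> permutes {..<N}} = tclass N ` {\<pi>. \<pi> permutes {..<N}}" by auto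
    thus "finite {tclass N \<pi> |\<pi>. \<pi> permutes {..<N}}" by (simp add: finite_permutations)
  qed (use assms in auto)
  finally show ?thesis .
qed

lemma tmax_witness:
  assumes "0 < n"
  shows "\<exists>\<pi>. \<pi> permutes {..<n} \<and> (\<forall>b<n. cyc n (shiftp n \<pi> b) + tmax n \<le> n)"
proof -
  have fin: "finite {tclass n \<pi> |\<pi>. \<pi> permutes {..<n}}"
  proof -
    have "{tclass n \<pi> |\<pi>. \<pi> permutes {..<n}} = tclass n ` {\<pi>. \<pi> permutes {..<n}}" by auto
    thus ?thesis by (simp add: finite_permutations)
  qed
  have ne: "{tclass n \<pi> |\<pi>. \<pi> permutes {..<n}} \<noteq> {}" using permutes_id by blast
  have "tmax n \<in> {tclass n \<pi> |\<pi>. \<pi> permutes {..<n}}" unfolding tmax_def by (rule Max_in[OF fin ne])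
  then obtain \<pi> where \<pi>: "\<pi> permutes {..<n}" "tmax n = tclass n \<pi>" by auto
  have "cyc n (shiftp n \<pi> b) + tmax n \<le> n" if "b < n" for b
  proof -
    have eq: "{tperm n (shiftp n \<pi> b) | b. b < n} = (\<lambda>b. tperm n (shiftp n \<pi> b)) ` {..<n}" by auto
    have "tclass n \<pi> \<le> tperm n (shiftp n \<pi> b)" unfolding tclass_def eq
      by (rule Min_le) (use that in auto)
    thus ?thesis using \<pi>(2) cyc_le[of n "shiftp n \<pi> b"] unfolding tperm_def by linarith
  qed
  with \<pi> show ?thesis by blast
qed


lemma primroot_basic:
  assumes "prime p" "residue_primroot p a"
  shows "coprime p a" "ord p a = p - 1"
  using assms by (auto simp: residue_primroot_def totient_prime)

lemma primroot_pow_eq_iff: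
  assumes "prime p" "residue_primroot p a"
  shows "[a ^ i = a ^ j] (mod p) \<longleftrightarrow> [i = j] (mod (p - 1))"
  using order_divides_expdiff[of p a i j] primroot_basic[OF assms] by simp

lemma primroot_pow_not_dvd:
  assumes "prime p" "residue_primroot p a"
  shows "\<not> p dvd a ^ k"
proof
  assume "p dvd a ^ k"
  hence "p dvd a" using assms(1) prime_dvd_power by blast
  hence "p dvd gcd p a" by simp
  thus False using primroot_basic(1)[OF assms] assms(1) by (simp add: prime_gt_1_nat)
qed

lemma primroot_log:
  assumes "prime p" "residue_primroot p a" "\<not> p dvd z"
  shows "\<exists>k<p-1. [a ^ k = z] (mod p)"
proof -
  have p1: "p > 1" using assms(1) prime_gt_1_nat by blast
  have "z mod p \<in> totatives p" using assms(1,3) p1 by (auto simp: totatives_prime dvd_eq_mod_eq_0)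
  hence "z mod p \<in> (\<lambda>i. a ^ i mod p) ` {..<totient p}"
    using residue_primroot_is_generator[OF p1 assms(2)] unfolding bij_betw_def by simp
  then obtain k where "k < totient p" "a ^ k mod p = z mod p" by auto
  thus ?thesis using assms(1) by (auto simp: totient_prime cong_def)
qed

lemma primroot_log_int:
  assumes "prime p" "residue_primroot p a" "\<not> int p dvd z"
  shows "\<exists>k<p-1. [int a ^ k = z] (mod int p)"
proof -
  have "\<not> p dvd nat (z mod int p)"
  proof
    assume "p dvd nat (z mod int p)"
    moreover have "int (nat (z mod int p)) = z mod int p" using prime_gt_0_nat[OF assms(1)] by simp
    ultimately have "int p dvd z mod int p" by (metis int_dvd_int_iff)
    thus False using assms(3) by (simp add: dvd_mod_iff)
  qed
  then obtain k where k: "k < p - 1" "[a ^ k = nat (z mod int p)] (mod p)"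
    using primroot_log[OF assms(1,2)] by blast
  have "[int (a ^ k) = int (nat (z mod int p))] (mod int p)" using k(2) cong_int_iff by blast
  moreover have "int (nat (z mod int p)) = z mod int p"
    using assms(1) prime_gt_0_nat by simp
  ultimately have "[int a ^ k = z mod int p] (mod int p)" by simp
  hence "[int a ^ k = z] (mod int p)" by (metis cong_def mod_mod_trivial)
  thus ?thesis using k(1) by blast
qed

lemma fermat_int:
  assumes "prime p" "\<not> int p dvd a"
  shows "[a ^ (p - 1) = 1] (mod int p)"
proof -
  have "[nat (a mod p) ^ (p - 1) = 1] (mod p)"
  proof (rule fermat_theorem[OF assms(1)])
    show "\<not> p dvd nat (a mod int p)"
    proof
      assume "p dvd nat (a mod int p)"
      moreover have "int (nat (a mod int p)) = a mod int p" using prime_gt_0_nat[OF assms(1)] by simp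
      ultimately have "int p dvd a mod int p" by (metis int_dvd_int_iff)
      thus False using assms(2) by (simp add: dvd_mod_iff)
    qed
  qed
  hence "[int (nat (a mod p) ^ (p - 1)) = int 1] (mod int p)" using cong_int_iff by blast
  hence "[(a mod p) ^ (p - 1) = 1] (mod int p)" using assms(1) prime_gt_0_nat by simp
  thus ?thesis by (metis cong_def power_mod)
qed

lemma affine_fixpt:
  assumes "n > 0" "coprime (M - 1) (int n)"
  shows "\<exists>y0<n. [M * int y0 + d = int y0] (mod int n)"
proof -
  obtain u where u: "[(M - 1) * u = 1] (mod int n)" using cong_solve_coprime_int[OF assms(2)] by blast
  define y where "y = (- d * u) mod int n"
  have y0: "y \<ge> 0" "y < int n" using assms(1) unfolding y_def by auto
  have "[(M - 1) * y = (M - 1) * (- d * u)] (mod int n)" unfolding y_def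
    by (simp add: cong_def mod_mult_right_eq)
  also have "(M - 1) * (- d * u) = - d * ((M - 1) * u)" by (simp add: algebra_simps)
  also have "[\<dots> = - d * 1] (mod int n)" by (rule cong_mult[OF cong_refl u])
  finally have "[(M - 1) * y = - d] (mod int n)" by simp
  hence "[(M - 1) * y + (d + y) = - d + (d + y)] (mod int n)" by (rule cong_add) simp
  hence "[M * y + d = y] (mod int n)" by (simp add: algebra_simps)
  moreover have "int (nat y) = y" using y0 by simp
  ultimately show ?thesis using y0 by (intro exI[of _ "nat y"]) auto
qed

lemma affine_iter:
  assumes "\<And>y. y < n \<Longrightarrow> \<rho> y < n \<and> [int (\<rho> y) = M * int y + d] (mod int n)"
    "[M * y0 + d = y0] (mod int n)" "y < n"
  shows "(\<rho> ^^ k) y < n \<and> [int ((\<rho> ^^ k) y) = y0 + M ^ k * (int y - y0)] (mod int n)"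
proof (induction k)
  case 0 then show ?case using assms(3) by simp
next
  case (Suc k)
  define z where "z = (\<rho> ^^ k) y"
  have z: "z < n" "[int z = y0 + M ^ k * (int y - y0)] (mod int n)" using Suc unfolding z_def by auto
  have "[int (\<rho> z) = M * int z + d] (mod int n)" using assms(1) z(1) by blast
  also have "[M * int z + d = M * (y0 + M ^ k * (int y - y0)) + d] (mod int n)"
    by (intro cong_add cong_mult cong_refl z(2))
  also have "M * (y0 + M ^ k * (int y - y0)) + d = (M * y0 + d) + M ^ Suc k * (int y - y0)"
    by (simp add: algebra_simps)
  also have "[\<dots> = y0 + M ^ Suc k * (int y - y0)] (mod int n)"
    by (intro cong_add assms(2) cong_refl)
  finally show ?case using assms(1) z(1) unfolding z_def by simp
qed

lemma cong_lt_eq: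
  assumes "[int a = int b] (mod int n)" "a < n" "b < n"
  shows "a = b"
  using assms by (simp add: cong_int_iff cong_def)

lemma mult_reach:
  assumes q: "prime q" and g: "residue_primroot q g" and e: "e > 0" "\<not> (q - 1) dvd e"
    and \<rho>: "\<And>y. y < q \<Longrightarrow> \<rho> y < q \<and> [int (\<rho> y) = int g ^ e * int y + d] (mod int q)"
  shows "\<exists>R. finite R \<and> card R \<le> e + 1 \<and> (\<forall>y<q. \<exists>k. (\<rho> ^^ k) y \<in> R)"
proof -
  have q0: "q > 0" and q1: "q > 1" using prime_gt_0_nat[OF q] prime_gt_1_nat[OF q] by auto
  have "\<not> [g ^ e = g ^ 0] (mod q)" using primroot_pow_eq_iff[OF q g, of e 0] e(2)
    by (simp add: cong_0_iff)
  hence ne1: "\<not> [int g ^ e = 1] (mod int q)" by (metis cong_int_iff of_nat_1 of_nat_power power_0)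
  have "coprime (int g ^ e - 1) (int q)"
  proof -
    have "\<not> int q dvd (int g ^ e - 1)" using ne1 by (simp add: cong_iff_dvd_diff)
    moreover have "prime (int q)" using q by simp
    ultimately show ?thesis by (metis coprime_commute prime_imp_coprime)
  qed
  then obtain y0 where y0: "y0 < q" "[int g ^ e * int y0 + d = int y0] (mod int q)"
    using affine_fixpt[OF q0] by blast
  define R where "R = insert y0 ((\<lambda>i. nat ((int y0 + int g ^ i) mod int q)) ` {..<e})"
  have "finite R" unfolding R_def by simp
  moreover have "card R \<le> e + 1"
  proof -
    have "card ((\<lambda>i. nat ((int y0 + int g ^ i) mod int q)) ` {..<e}) \<le> e"
      using card_image_le[of "{..<e}"] by simp
    thus ?thesis unfolding R_def by (simp add: card_insert_if)
  qed
  moreover have "\<exists>k. (\<rho> ^^ k) y \<in> R" if y: "y < q" for y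
  proof (cases "y = y0")
    case True then show ?thesis unfolding R_def by (intro exI[of _ 0]) simp
  next
    case False
    have "\<not> int q dvd (int y - int y0)"
    proof
      assume "int q dvd (int y - int y0)"
      hence "[int y = int y0] (mod int q)" by (simp add: cong_iff_dvd_diff)
      thus False using cong_lt_eq y y0(1) False by blast
    qed
    then obtain j where j: "[int g ^ j = int y - int y0] (mod int q)" using primroot_log_int[OF q g] by blast
    define s where "s = j div e"
    define i where "i = j mod e"
    define k where "k = (q - 2) * s"
    have it: "(\<rho> ^^ k) y < q" "[int ((\<rho> ^^ k) y) = int y0 + (int g ^ e) ^ k * (int y - int y0)] (mod int q)"
      using affine_iter[OF \<rho> y0(2) y] by auto
    have "[(int g ^ e) ^ k * (int y - int y0) = (int g ^ e) ^ k * int g ^ j] (mod int q)"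
      by (intro cong_mult cong_refl) (use j in \<open>simp add: cong_sym\<close>)
    also have "(int g ^ e) ^ k * int g ^ j = int g ^ ((q - 1) * (e * s)) * int g ^ i"
    proof -
      have "e * k + j = (q - 1) * (e * s) + i"
      proof -
        have j: "j = e * s + i" unfolding s_def i_def by simp
        have qq: "q - 1 = (q - 2) + 1" using q1 by linarith
        have "e * k + j = e * s * ((q - 2) + 1) + i" unfolding k_def j by (simp add: algebra_simps)
        also have "\<dots> = (q - 1) * (e * s) + i" unfolding qq[symmetric] by (simp add: algebra_simps)
        finally show ?thesis .
      qed
      thus ?thesis by (simp flip: power_mult power_add add: power_mult[symmetric])
    qed
    also have "[int g ^ ((q - 1) * (e * s)) * int g ^ i = 1 * int g ^ i] (mod int q)"
    proof (intro cong_mult cong_refl)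
      have "[(int g ^ (q - 1)) ^ (e * s) = 1 ^ (e * s)] (mod int q)"
        by (intro cong_pow fermat_int q) (use primroot_pow_not_dvd[OF q g, of 1] in \<open>metis int_dvd_int_iff power_one_right\<close>)
      thus "[int g ^ ((q - 1) * (e * s)) = 1] (mod int q)" by (simp add: power_mult)
    qed
    finally have "[int y0 + (int g ^ e) ^ k * (int y - int y0) = int y0 + 1 * int g ^ i] (mod int q)"
      by (intro cong_add cong_refl)
    hence "[int ((\<rho> ^^ k) y) = int y0 + int g ^ i] (mod int q)"
      using it(2) cong_trans by fastforce
    moreover have "[int y0 + int g ^ i = int (nat ((int y0 + int g ^ i) mod int q))] (mod int q)"
      using q0 by (simp add: cong_def)
    ultimately have "[int ((\<rho> ^^ k) y) = int (nat ((int y0 + int g ^ i) mod int q))] (mod int q)"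
      by (rule cong_trans)
    moreover have "nat ((int y0 + int g ^ i) mod int q) < q" using q0 by (simp add: nat_less_iff)
    ultimately have "(\<rho> ^^ k) y = nat ((int y0 + int g ^ i) mod int q)"
      using it(1) cong_lt_eq by blast
    moreover have "i < e" unfolding i_def using e(1) by simp
    ultimately show ?thesis unfolding R_def by blast
  qed
  ultimately show ?thesis by blast
qed

lemma transl_reach:
  assumes q: "prime q" and D: "\<not> int q dvd D"
    and \<rho>: "\<And>y. y < q \<Longrightarrow> \<rho> y < q \<and> [int (\<rho> y) = int y + D] (mod int q)"
    and y: "y < q"
  shows "\<exists>k. (\<rho> ^^ k) y = 0"
proof -
  have q0: "q > 0" using q prime_gt_0_nat by blast
  have iter: "(\<rho> ^^ k) y < q \<and> [int ((\<rho> ^^ k) y) = int y + int k * D] (mod int q)" for k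
  proof (induction k)
    case 0 then show ?case using y by simp
  next
    case (Suc k)
    define z where "z = (\<rho> ^^ k) y"
    have z: "z < q" "[int z = int y + int k * D] (mod int q)" using Suc unfolding z_def by auto
    have "[int (\<rho> z) = int z + D] (mod int q)" using \<rho> z(1) by blast
    also have "[int z + D = (int y + int k * D) + D] (mod int q)" by (intro cong_add z(2) cong_refl)
    finally show ?case using \<rho> z(1) unfolding z_def by (simp add: algebra_simps)
  qed
  have "prime (int q)" using q by simp
  hence "coprime (int q) D" using D prime_imp_coprime by blast
  hence "coprime D (int q)" by (simp add: coprime_commute)
  then obtain u where u: "[D * u = 1] (mod int q)" using cong_solve_coprime_int by blast
  define k where "k = nat ((- int y * u) mod int q)"
  have "int k = (- int y * u) mod int q" unfolding k_def using q0 by simp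
  hence "[int k = - int y * u] (mod int q)" by (simp add: cong_def)
  hence "[int y + int k * D = int y + (- int y * u) * D] (mod int q)" by (intro cong_add cong_mult cong_refl)
  also have "int y + (- int y * u) * D = int y - int y * (D * u)" by (simp add: algebra_simps)
  also have "[\<dots> = int y - int y * 1] (mod int q)" by (intro cong_diff cong_mult cong_refl u)
  finally have "[int y + int k * D = 0] (mod int q)" by simp
  hence "[int ((\<rho> ^^ k) y) = 0] (mod int q)" using iter[of k] cong_trans by blast
  hence "(\<rho> ^^ k) y = 0" using iter[of k] cong_lt_eq[of "(\<rho> ^^ k) y" 0 q] q0 by simp
  thus ?thesis by blast
qed


definition crt :: "nat \<Rightarrow> nat \<Rightarrow> nat \<Rightarrow> nat \<Rightarrow> nat" where
  "crt p q A B = (SOME z. z < p * q \<and> z mod p = A \<and> z mod q = B)"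

lemma crt_ex:
  fixes p q A B :: nat
  assumes "coprime p q" "0 < p" "0 < q" "A < p" "B < q"
  shows "\<exists>z. z < p * q \<and> z mod p = A \<and> z mod q = B"
proof -
  obtain z where "z < p * q" "[z = A] (mod p)" "[z = B] (mod q)"
    using binary_chinese_remainder_unique_nat[of p q A B] assms by auto
  thus ?thesis using assms by (intro exI[of _ z]) (auto simp: cong_def)
qed

lemma crt:
  fixes p q A B :: nat
  assumes "coprime p q" "0 < p" "0 < q" "A < p" "B < q"
  shows "crt p q A B < p * q" "crt p q A B mod p = A" "crt p q A B mod q = B"
  using someI_ex[OF crt_ex[OF assms]] unfolding crt_def by auto

lemma crt_unique:
  fixes p q x y :: nat
  assumes "coprime p q" "0 < p" "0 < q" "x < p * q" "y < p * q" "x mod p = y mod p" "x mod q = y mod q"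
  shows "x = y"
proof -
  have "\<exists>!z. z < p * q \<and> [z = x mod p] (mod p) \<and> [z = x mod q] (mod q)"
    using binary_chinese_remainder_unique_nat[of p q] assms by auto
  moreover have "x < p * q \<and> [x = x mod p] (mod p) \<and> [x = x mod q] (mod q)" using assms by (simp add: cong_def)
  moreover have "y < p * q \<and> [y = x mod p] (mod p) \<and> [y = x mod q] (mod q)" using assms by (simp add: cong_def)
  ultimately show ?thesis by blast
qed

definition crt_perm :: "nat \<Rightarrow> nat \<Rightarrow> nat \<Rightarrow> (nat \<Rightarrow> nat) \<Rightarrow> (nat \<Rightarrow> nat) \<Rightarrow> nat \<Rightarrow> nat" where
  "crt_perm p q a mm tt x = (if x < p * q then
      crt p q (a * (x mod p) mod p) ((mm (x mod p) * (x mod q) + tt (x mod p)) mod q) else x)"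

primrec fibG :: "nat \<Rightarrow> nat \<Rightarrow> (nat \<Rightarrow> nat) \<Rightarrow> (nat \<Rightarrow> nat) \<Rightarrow> (nat \<Rightarrow> nat) \<Rightarrow> nat \<Rightarrow> nat \<Rightarrow> nat" where
  "fibG q b mm tt U 0 y = y"
| "fibG q b mm tt U (Suc k) y = (mm (U k) * ((fibG q b mm tt U k y + b) mod q) + tt (U k)) mod q"

lemma primroot_ne1:
  assumes p: "prime p" "2 < p" and a: "residue_primroot p a"
  shows "coprime (int a - 1) (int p)"
proof -
  have "\<not> [a ^ 1 = a ^ 0] (mod p)"
  proof
    assume "[a ^ 1 = a ^ 0] (mod p)"
    hence "[1 = 0] (mod (p - 1))" using primroot_pow_eq_iff[OF p(1) a] by blast
    hence "p - 1 dvd 1" by (simp add: cong_def)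
    thus False using p(2) by simp
  qed
  hence "\<not> [int a = 1] (mod int p)" by (metis cong_int_iff of_nat_1 power_0 power_one_right)
  hence "\<not> int p dvd (int a - 1)" by (simp add: cong_iff_dvd_diff)
  moreover have "prime (int p)" using p by simp
  ultimately show ?thesis by (metis coprime_commute prime_imp_coprime)
qed

lemma crt_skew:
  fixes p q a b :: nat and mm tt :: "nat \<Rightarrow> nat"
  assumes p: "prime p" "2 < p" and q: "prime q" and pq: "p \<noteq> q" and a: "residue_primroot p a"
    and mm: "\<And>u. coprime (mm u) q" and b: "b < p * q"
  shows "\<exists>x0<p. \<forall>R1 R2. finite R1 \<longrightarrow> finite R2 \<longrightarrow>
     (\<forall>y<q. \<exists>k. ((\<lambda>y. (mm ((x0 + b) mod p) * ((y + b) mod q) + tt ((x0 + b) mod p)) mod q) ^^ k) y \<in> R1) \<longrightarrow>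
     (\<forall>y<q. \<exists>k. (fibG q b mm tt (\<lambda>l. ((x0 + a ^ l) mod p + b) mod p) (p - 1) ^^ k) y \<in> R2) \<longrightarrow>
     cyc (p * q) (shiftp (p * q) (crt_perm p q a mm tt) b) \<le> card R1 + card R2"
proof -
  have p0: "0 < p" and q0: "0 < q" using p q prime_gt_0_nat by auto
  have cop: "coprime p q" using p(1) q pq by (simp add: primes_coprime)
  define N where "N = p * q"
  have N0: "0 < N" unfolding N_def using p0 q0 by simp
  define \<pi> where "\<pi> = crt_perm p q a mm tt"
  have crtp: "crt p q A B < N" "crt p q A B mod p = A" "crt p q A B mod q = B" if "A < p" "B < q" for A B
    using crt[OF cop p0 q0 that] unfolding N_def by auto
  have uniq: "x = y" if "x < N" "y < N" "x mod p = y mod p" "x mod q = y mod q" for x y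
    using crt_unique[OF cop p0 q0] that unfolding N_def by blast
  have ap: "coprime a p" using primroot_basic(1)[OF p(1) a] by (simp add: coprime_commute)
  have \<pi>_perm: "\<pi> permutes {..<N}"
  proof (rule inj_imp_permutes)
    show "inj_on \<pi> {..<N}"
    proof
      fix x y assume xy: "x \<in> {..<N}" "y \<in> {..<N}" "\<pi> x = \<pi> y"
      define Ax where "Ax = a * (x mod p) mod p"
      define Bx where "Bx = (mm (x mod p) * (x mod q) + tt (x mod p)) mod q"
      define Ay where "Ay = a * (y mod p) mod p"
      define By where "By = (mm (y mod p) * (y mod q) + tt (y mod p)) mod q"
      have e: "crt p q Ax Bx = crt p q Ay By" using xy unfolding \<pi>_def crt_perm_def Ax_def Bx_def Ay_def By_def N_def by auto
      have "Ax = Ay" using crtp(2)[of Ax Bx] crtp(2)[of Ay By] e p0 q0 unfolding Ax_def Bx_def Ay_def By_def by auto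
      hence "[a * (x mod p) = a * (y mod p)] (mod p)" unfolding Ax_def Ay_def cong_def .
      hence xp: "x mod p = y mod p" using cong_mult_lcancel_nat[OF ap] p0 by (simp add: cong_def)
      have "Bx = By" using crtp(3)[of Ax Bx] crtp(3)[of Ay By] e p0 q0 unfolding Ax_def Bx_def Ay_def By_def by auto
      hence "[mm (x mod p) * (x mod q) + tt (x mod p) = mm (x mod p) * (y mod q) + tt (x mod p)] (mod q)"
        unfolding Bx_def By_def cong_def xp .
      hence "[mm (x mod p) * (x mod q) = mm (x mod p) * (y mod q)] (mod q)" by (simp add: cong_add_rcancel_nat)
      hence "x mod q = y mod q" using cong_mult_lcancel_nat[OF mm] q0 by (simp add: cong_def)
      thus "x = y" using uniq xy xp by auto
    qed
    show "\<pi> x \<in> {..<N}" if "x \<in> {..<N}" for x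
      using that crtp p0 q0 unfolding \<pi>_def crt_perm_def N_def by auto
    show "\<pi> x = x" if "x \<notin> {..<N}" for x using that unfolding \<pi>_def crt_perm_def N_def by auto
  qed simp
  define \<tau> where "\<tau> j = a * ((j + b) mod p) mod p" for j
  have \<tau>: "\<tau> j < p \<and> [int (\<tau> j) = int a * int j + int a * int b] (mod int p)" for j
  proof -
    have "[\<tau> j = a * (j + b)] (mod p)" unfolding \<tau>_def cong_def by (simp add: mod_mult_right_eq)
    hence "[int (\<tau> j) = int (a * (j + b))] (mod int p)" using cong_int_iff by blast
    thus ?thesis unfolding \<tau>_def using p0 by (simp add: algebra_simps)
  qed
  obtain x0 where x0: "x0 < p" "[int a * int x0 + int a * int b = int x0] (mod int p)"
    using affine_fixpt[OF p0 primroot_ne1[OF p a]] by blast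
  have \<tau>x0: "\<tau> x0 = x0" using \<tau>[of x0] x0 cong_lt_eq cong_trans by blast
  have base_iter: "(\<tau> ^^ k) j < p \<and> [int ((\<tau> ^^ k) j) = int x0 + int a ^ k * (int j - int x0)] (mod int p)"
    if "j < p" for j k
    using affine_iter[of p \<tau> "int a" "int a * int b" "int x0" j k] \<tau> x0(2) that by blast
  define x1 where "x1 = (x0 + 1) mod p"
  have x1p: "x1 < p" unfolding x1_def using p0 by simp
  have x1x0: "x1 \<noteq> x0"
  proof
    assume "x1 = x0"
    hence "(x0 + 1) mod p = x0 mod p" unfolding x1_def using x0(1) by simp
    hence "[x0 + 1 = x0 + 0] (mod p)" by (simp add: cong_def)
    hence "[1 = 0] (mod p)" by (metis cong_add_lcancel_nat)
    thus False using p(2) by (simp add: cong_def)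
  qed
  have T1: "(\<tau> ^^ l) x1 = (x0 + a ^ l) mod p" for l
  proof -
    have "[int x1 - int x0 = 1] (mod int p)"
    proof -
      have "[int x1 = int x0 + 1] (mod int p)" unfolding x1_def by (simp add: cong_def zmod_int add.commute)
      thus ?thesis by (metis add_diff_cancel_left' cong_diff cong_refl)
    qed
    hence "[int x0 + int a ^ l * (int x1 - int x0) = int x0 + int a ^ l * 1] (mod int p)"
      by (intro cong_add cong_mult cong_refl)
    hence "[int ((\<tau> ^^ l) x1) = int x0 + int a ^ l] (mod int p)"
      using base_iter[OF x1p, of l] cong_trans by force
    moreover have "[int x0 + int a ^ l = int ((x0 + a ^ l) mod p)] (mod int p)"
      by (simp add: cong_def zmod_int)
    ultimately have "[int ((\<tau> ^^ l) x1) = int ((x0 + a ^ l) mod p)] (mod int p)"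
      by (rule cong_trans)
    thus ?thesis using base_iter[OF x1p, of l] p0 cong_lt_eq by auto
  qed
  have T2: "(\<tau> ^^ (p - 1)) x1 = x1"
  proof -
    have "[a ^ (p - 1) = 1] (mod p)" using fermat_theorem[OF p(1)]
        primroot_pow_not_dvd[OF p(1) a, of 1] by simp
    hence "(x0 + a ^ (p - 1)) mod p = (x0 + 1) mod p" by (metis cong_def mod_add_right_eq)
    thus ?thesis using T1 unfolding x1_def by simp
  qed
  have T3: "\<exists>k. (\<tau> ^^ k) j = x1" if "j < p" "j \<noteq> x0" for j
  proof -
    have "\<not> int p dvd (int j - int x0)"
    proof
      assume "int p dvd (int j - int x0)"
      hence "[int j = int x0] (mod int p)" by (simp add: cong_iff_dvd_diff)
      thus False using cong_lt_eq that x0(1) by blast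
    qed
    then obtain i where i: "i < p - 1" "[int a ^ i = int j - int x0] (mod int p)"
      using primroot_log_int[OF p(1) a] by blast
    have "[int x0 + int a ^ (p - 1 - i) * (int j - int x0) = int x0 + int a ^ (p - 1 - i) * int a ^ i] (mod int p)"
      by (intro cong_add cong_mult cong_refl) (use i in \<open>simp add: cong_sym\<close>)
    also have "int a ^ (p - 1 - i) * int a ^ i = int (a ^ (p - 1))" using i(1) by (simp flip: power_add)
    also have "[int x0 + int (a ^ (p - 1)) = int x0 + int 1] (mod int p)"
    proof (intro cong_add cong_refl)
      have "[a ^ (p - 1) = 1] (mod p)" using fermat_theorem[OF p(1)]
        primroot_pow_not_dvd[OF p(1) a, of 1] by simp
      thus "[int (a ^ (p - 1)) = int 1] (mod int p)" using cong_int_iff by blast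
    qed
    finally have c: "[int x0 + int a ^ (p - 1 - i) * (int j - int x0) = int x0 + int 1] (mod int p)" .
    have "[int ((\<tau> ^^ (p - 1 - i)) j) = int x0 + int 1] (mod int p)"
      using base_iter[OF that(1), of "p - 1 - i"] c cong_trans by blast
    moreover have "[int x0 + int 1 = int x1] (mod int p)" unfolding x1_def
      by (simp add: cong_def zmod_int add.commute)
    ultimately have "[int ((\<tau> ^^ (p - 1 - i)) j) = int x1] (mod int p)" by (rule cong_trans)
    thus ?thesis using base_iter[OF that(1)] x1p cong_lt_eq by blast
  qed
  define \<sigma> where "\<sigma> = shiftp N \<pi> b"
  have \<sigma>_perm: "\<sigma> permutes {..<N}" unfolding \<sigma>_def by (rule shiftp_permutes[OF \<pi>_perm N0])
  have S1: "\<sigma> x < N \<and> \<sigma> x mod p = \<tau> (x mod p) \<and>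
      \<sigma> x mod q = (mm ((x mod p + b) mod p) * ((x mod q + b) mod q) + tt ((x mod p + b) mod p)) mod q"
    if "x < N" for x
  proof -
    define z where "z = (x + b) mod N"
    have z: "z < N" unfolding z_def using N0 by simp
    have zp: "z mod p = (x mod p + b) mod p" unfolding z_def N_def by (simp add: mod_mod_cancel mod_add_left_eq)
    have zq: "z mod q = (x mod q + b) mod q" unfolding z_def N_def by (simp add: mod_mod_cancel mod_add_left_eq)
    have "\<sigma> x = \<pi> z" unfolding \<sigma>_def shiftp_def z_def using that by simp
    also have "\<pi> z = crt p q (a * (z mod p) mod p) ((mm (z mod p) * (z mod q) + tt (z mod p)) mod q)"
      unfolding \<pi>_def crt_perm_def using z unfolding N_def by simp
    finally show ?thesis using crtp[of "a * (z mod p) mod p" "(mm (z mod p) * (z mod q) + tt (z mod p)) mod q"]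
      p0 q0 zp zq unfolding \<tau>_def by simp
  qed
  have iterp: "(\<sigma> ^^ k) x < N \<and> (\<sigma> ^^ k) x mod p = (\<tau> ^^ k) (x mod p)" if "x < N" for x k
    using that by (induction k) (auto simp: S1)
  define u0 where "u0 = (x0 + b) mod p"
  define \<rho>0 where "\<rho>0 y = (mm u0 * ((y + b) mod q) + tt u0) mod q" for y
  define U where "U l = ((x0 + a ^ l) mod p + b) mod p" for l
  define \<rho>1 where "\<rho>1 = fibG q b mm tt U (p - 1)"
  have fib0: "(\<sigma> ^^ k) x < N \<and> (\<sigma> ^^ k) x mod p = x0 \<and> (\<sigma> ^^ k) x mod q = (\<rho>0 ^^ k) (x mod q)"
    if "x < N" "x mod p = x0" for x k
  proof (induction k)
    case 0 then show ?case using that by simp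
  next
    case (Suc k)
    then show ?case using S1[of "(\<sigma> ^^ k) x"] \<tau>x0 x0(1) unfolding \<rho>0_def u0_def
      by (simp add: mod_mod_trivial)
  qed
  have fib1: "(\<sigma> ^^ k) x < N \<and> (\<sigma> ^^ k) x mod p = (\<tau> ^^ k) x1 \<and> (\<sigma> ^^ k) x mod q = fibG q b mm tt U k (x mod q)"
    if "x < N" "x mod p = x1" for x k
  proof (induction k)
    case 0 then show ?case using that by simp
  next
    case (Suc k)
    have "((\<tau> ^^ k) x1 + b) mod p = U k" unfolding U_def T1 by (simp add: mod_add_left_eq)
    then show ?case using S1[of "(\<sigma> ^^ k) x"] Suc x1p by (simp add: mod_mod_trivial)
  qed
  have ret1: "(\<sigma> ^^ ((p - 1) * s)) x < N \<and> (\<sigma> ^^ ((p - 1) * s)) x mod p = x1 \<and>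
      (\<sigma> ^^ ((p - 1) * s)) x mod q = (\<rho>1 ^^ s) (x mod q)" if "x < N" "x mod p = x1" for x s
  proof (induction s)
    case 0 then show ?case using that by simp
  next
    case (Suc s)
    have "(\<sigma> ^^ ((p - 1) * Suc s)) x = (\<sigma> ^^ (p - 1)) ((\<sigma> ^^ ((p - 1) * s)) x)"
      by (simp add: funpow_add)
    then show ?case using fib1[of "(\<sigma> ^^ ((p - 1) * s)) x" "p - 1"] Suc T2 unfolding \<rho>1_def by simp
  qed
  show ?thesis
  proof (intro exI[of _ x0] conjI allI impI x0(1))
    fix R1 R2 :: "nat set"
    assume fin: "finite R1" "finite R2"
      and H1: "\<forall>y<q. \<exists>k. ((\<lambda>y. (mm ((x0 + b) mod p) * ((y + b) mod q) + tt ((x0 + b) mod p)) mod q) ^^ k) y \<in> R1"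
      and H2: "\<forall>y<q. \<exists>k. (fibG q b mm tt (\<lambda>l. ((x0 + a ^ l) mod p + b) mod p) (p - 1) ^^ k) y \<in> R2"
    have H1': "\<exists>k. (\<rho>0 ^^ k) y \<in> R1" if "y < q" for y using H1 that unfolding \<rho>0_def u0_def by blast
    have H2': "\<exists>k. (\<rho>1 ^^ k) y \<in> R2" if "y < q" for y using H2 that unfolding \<rho>1_def U_def by blast
    define A1 where "A1 = {z. z < N \<and> z mod p = x0 \<and> z mod q \<in> R1}"
    define A2 where "A2 = {z. z < N \<and> z mod p = x1 \<and> z mod q \<in> R2}"
    have finA: "finite (A1 \<union> A2)" unfolding A1_def A2_def by (rule finite_subset[of _ "{..<N}"]) auto
    have c1: "card A1 \<le> card R1"
      by (rule card_inj_on_le[of "\<lambda>z. z mod q"]) (use fin uniq in \<open>auto simp: A1_def inj_on_def\<close>)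
    have c2: "card A2 \<le> card R2"
      by (rule card_inj_on_le[of "\<lambda>z. z mod q"]) (use fin uniq in \<open>auto simp: A2_def inj_on_def\<close>)
    have "cyc N \<sigma> \<le> card (A1 \<union> A2)"
    proof (rule cyc_cover[OF \<sigma>_perm finA])
      fix x assume x: "x < N"
      show "\<exists>k. (\<sigma> ^^ k) x \<in> A1 \<union> A2"
      proof (cases "x mod p = x0")
        case True
        obtain k where "(\<rho>0 ^^ k) (x mod q) \<in> R1" using H1'[of "x mod q"] q0 by auto
        hence "(\<sigma> ^^ k) x \<in> A1" using fib0[OF x True, of k] unfolding A1_def by auto
        thus ?thesis by blast
      next
        case False
        obtain k where k: "(\<tau> ^^ k) (x mod p) = x1" using T3[of "x mod p"] False p0 by auto
        define y where "y = (\<sigma> ^^ k) x"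
        have y: "y < N" "y mod p = x1" using iterp[OF x, of k] k unfolding y_def by auto
        obtain s where s: "(\<rho>1 ^^ s) (y mod q) \<in> R2" using H2'[of "y mod q"] q0 by auto
        have "(\<sigma> ^^ ((p - 1) * s)) y \<in> A2" using ret1[OF y, of s] s unfolding A2_def by auto
        hence "(\<sigma> ^^ ((p - 1) * s + k)) x \<in> A2" unfolding y_def by (simp add: funpow_add)
        thus ?thesis by blast
      qed
    qed
    also have "\<dots> \<le> card A1 + card A2" by (rule card_Un_le)
    finally show "cyc (p * q) (shiftp (p * q) (crt_perm p q a mm tt) b) \<le> card R1 + card R2"
      using c1 c2 unfolding \<sigma>_def \<pi>_def N_def by simp
  qed
qed


lemma mixed_decode[simp]:
  assumes "j < (m::nat)"
  shows "(j + m * F) mod m = j" "(j + m * F) div m = F"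
  using assms by auto

lemma div_lt_mult: "x < n * (m::nat) \<Longrightarrow> x div m < n"
  by (simp add: less_mult_imp_div_less mult.commute)

lemma mod_mult_div: "((x::nat) mod (n * m)) div m = (x div m) mod n"
proof (cases "m = 0")
  case False
  have "x mod (n * m) = m * (x div m mod n) + x mod m" by (simp add: mod_mult2_eq mult.commute)
  thus ?thesis using False by simp
qed simp

lemma arith1:
  fixes tm tn n m :: nat
  assumes "tm + 1 \<le> m" "tn \<le> n"
  shows "n * m - ((m - tm - 1) * n + (n - tn)) = n * tm + tn"
proof -
  obtain A where A: "m = A + tm + 1" using assms(1) by (metis add.commute le_Suc_ex Suc_eq_plus1 add.assoc)
  obtain B where B: "n = B + tn" using assms(2) by (metis add.commute le_add_diff_inverse2)
  show ?thesis unfolding A B by (simp add: algebra_simps)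
qed

lemma part1:
  assumes n2: "2 \<le> n" and m2: "2 \<le> m"
  shows "n * tmax m + tmax n \<le> tmax (n * m)"
proof -
  obtain \<pi>m where \<pi>m: "\<pi>m permutes {..<m}" "\<And>b. b < m \<Longrightarrow> cyc m (shiftp m \<pi>m b) + tmax m \<le> m"
    using tmax_witness[of m] m2 by auto
  obtain \<pi>n where \<pi>n: "\<pi>n permutes {..<n}" "\<And>b. b < n \<Longrightarrow> cyc n (shiftp n \<pi>n b) + tmax n \<le> n"
    using tmax_witness[of n] n2 by auto
  define N where "N = n * m"
  have m0: "0 < m" and n0: "0 < n" using n2 m2 by auto
  have N0: "0 < N" unfolding N_def using n0 m0 by simp
  have \<pi>m_lt: "\<pi>m j < m" if "j < m" for j using permutes_in_image[OF \<pi>m(1)] that by auto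
  have \<pi>n_lt: "\<pi>n j < n" if "j < n" for j using permutes_in_image[OF \<pi>n(1)] that by auto
  define F where "F x = (if \<pi>m (x mod m) = 0 then \<pi>n (x div m) else x div m)" for x
  define \<pi> where "\<pi> x = (if x < N then \<pi>m (x mod m) + m * F x else x)" for x
  have F_lt: "F x < n" if "x < N" for x
    using that \<pi>n_lt div_lt_mult[of x n m] unfolding F_def N_def by auto
  have lt_N: "j + m * i < N" if "j < m" "i < n" for j i
  proof -
    have "j + m * i < m + m * i" using that by simp
    also have "\<dots> = m * (i + 1)" by simp
    also have "\<dots> \<le> m * n" using that by (intro mult_le_mono2) simp
    finally show ?thesis unfolding N_def by (simp add: mult.commute)
  qed
  have \<pi>_perm: "\<pi> permutes {..<N}"
  proof (rule inj_imp_permutes)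
    show "inj_on \<pi> {..<N}"
    proof
      fix x y assume xy: "x \<in> {..<N}" "y \<in> {..<N}" "\<pi> x = \<pi> y"
      have e: "\<pi>m (x mod m) + m * F x = \<pi>m (y mod m) + m * F y"
        using xy unfolding \<pi>_def by auto
      have "\<pi>m (x mod m) = \<pi>m (y mod m)"
        using arg_cong[OF e, of "\<lambda>z. z mod m"] \<pi>m_lt m0 by simp
      hence jm: "x mod m = y mod m" using permutes_inj[OF \<pi>m(1)] by (meson injD)
      have "F x = F y" using arg_cong[OF e, of "\<lambda>z. z div m"] \<pi>m_lt m0 by simp
      hence "x div m = y div m"
        using jm permutes_inj[OF \<pi>n(1)] unfolding F_def by (auto split: if_splits dest: injD)
      thus "x = y" using jm by (metis div_mod_decomp)
    qed
    show "\<pi> x \<in> {..<N}" if "x \<in> {..<N}" for x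
      using that lt_N[OF \<pi>m_lt F_lt] m0 unfolding \<pi>_def by auto
    show "\<pi> x = x" if "x \<notin> {..<N}" for x using that unfolding \<pi>_def by auto
  qed simp
  have "cyc N (shiftp N \<pi> b) \<le> (m - tmax m - 1) * n + (n - tmax n)" if bN: "b < N" for b
  proof -
    define \<sigma> where "\<sigma> = shiftp N \<pi> b"
    define \<tau> where "\<tau> = shiftp m \<pi>m (b mod m)"
    have \<sigma>_perm: "\<sigma> permutes {..<N}" unfolding \<sigma>_def by (rule shiftp_permutes[OF \<pi>_perm N0])
    have \<tau>_perm: "\<tau> permutes {..<m}" unfolding \<tau>_def by (rule shiftp_permutes[OF \<pi>m(1) m0])
    have \<tau>_lt: "(\<tau> ^^ k) j < m" if "j < m" for j k
      using permutes_in_funpow_image[OF \<tau>_perm] that by auto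
    have F1: "\<sigma> x < N \<and> \<sigma> x mod m = \<tau> (x mod m) \<and>
       \<sigma> x div m = (if \<tau> (x mod m) = 0 then \<pi>n ((x div m + (x mod m + b) div m) mod n)
                     else (x div m + (x mod m + b) div m) mod n)" if "x < N" for x
    proof -
      define y where "y = (x + b) mod N"
      have y: "y < N" unfolding y_def using N0 by simp
      have ym: "y mod m = (x + b) mod m" unfolding y_def N_def by (simp add: mod_mod_cancel)
      have "y div m = ((x + b) div m) mod n" unfolding y_def N_def
        by (rule mod_mult_div)
      also have "(x + b) div m = x div m + (x mod m + b) div m"
      proof -
        have "x + b = (x mod m + b) + m * (x div m)" by simp
        thus ?thesis using m0 by (metis add.commute div_mult_self2 less_not_refl2)
      qed
      finally have yd: "y div m = (x div m + (x mod m + b) div m) mod n" .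
      have tx: "\<tau> (x mod m) = \<pi>m ((x + b) mod m)" unfolding \<tau>_def shiftp_def using m0
        by (simp add: mod_add_eq)
      have "\<sigma> x = \<pi> y" unfolding \<sigma>_def shiftp_def y_def using that by simp
      hence sx: "\<sigma> x = \<pi>m (y mod m) + m * F y" unfolding \<pi>_def using y by simp
      show ?thesis using sx y \<pi>m_lt[of "y mod m"] F_lt[OF y] lt_N m0 unfolding F_def
        by (simp add: ym yd tx)
    qed
    have iter: "(\<sigma> ^^ k) x < N \<and> (\<sigma> ^^ k) x mod m = (\<tau> ^^ k) (x mod m)" if "x < N" for x k
      using that by (induction k) (auto simp: F1)
    obtain R0 where R0: "R0 \<subseteq> {..<m}" "card R0 \<le> cyc m \<tau>" "\<And>j. j < m \<Longrightarrow> \<exists>k. (\<tau> ^^ k) j \<in> R0"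
      using reps_exist[OF \<tau>_perm] by blast
    obtain k0 where k0: "(\<tau> ^^ k0) 0 \<in> R0" using R0(3)[of 0] m0 by blast
    define r0 where "r0 = (\<tau> ^^ k0) 0"
    obtain k1 where k1: "(\<tau> ^^ k1) r0 = 0" unfolding r0_def using orbit_sym[OF \<tau>_perm] m0 by blast
    obtain P where P: "P > 0" "(\<tau> ^^ P) 0 = 0" using funpow_period[OF \<tau>_perm] m0 by blast
    define L where "L = (LEAST P. P > 0 \<and> (\<tau> ^^ P) 0 = 0)"
    have L: "L > 0" "(\<tau> ^^ L) 0 = 0" using LeastI[of "\<lambda>P. P > 0 \<and> (\<tau> ^^ P) 0 = 0", OF conjI[OF P]]
      unfolding L_def by auto
    have Lmin: "(\<tau> ^^ k) 0 \<noteq> 0" if "0 < k" "k < L" for k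
      using not_less_Least[of k "\<lambda>P. P > 0 \<and> (\<tau> ^^ P) 0 = 0"] that unfolding L_def by auto
    have fib: "\<exists>C. \<forall>i<n. (\<sigma> ^^ k) (m * i) = (\<tau> ^^ k) 0 + m * ((i + C) mod n)" if "k < L" for k
      using that
    proof (induction k)
      case 0 show ?case by (intro exI[of _ 0]) simp
    next
      case (Suc k)
      then obtain C where C: "\<forall>i<n. (\<sigma> ^^ k) (m * i) = (\<tau> ^^ k) 0 + m * ((i + C) mod n)" by auto
      define c where "c = ((\<tau> ^^ k) 0 + b) div m"
      have "(\<sigma> ^^ Suc k) (m * i) = (\<tau> ^^ Suc k) 0 + m * ((i + (C + c)) mod n)" if "i < n" for i
      proof -
        define x where "x = (\<tau> ^^ k) 0 + m * ((i + C) mod n)"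
        have tk: "(\<tau> ^^ k) 0 < m" using \<tau>_lt m0 by blast
        have x: "x < N" unfolding x_def using lt_N[OF tk] n0 by simp
        have xm: "x mod m = (\<tau> ^^ k) 0" "x div m = (i + C) mod n" unfolding x_def using tk by auto
        have nz: "\<tau> (x mod m) \<noteq> 0" using Lmin[of "Suc k"] Suc.prems xm by simp
        have "\<sigma> x = \<sigma> x mod m + m * (\<sigma> x div m)" by simp
        also have "\<dots> = (\<tau> ^^ Suc k) 0 + m * ((i + (C + c)) mod n)"
          using F1[OF x] nz xm unfolding c_def by (simp add: mod_add_left_eq add.assoc)
        finally show ?thesis using C that unfolding x_def by simp
      qed
      thus ?case by blast
    qed
    obtain L' where L': "L = Suc L'" using L(1) gr0_implies_Suc by blast
    obtain C where C: "\<forall>i<n. (\<sigma> ^^ L') (m * i) = (\<tau> ^^ L') 0 + m * ((i + C) mod n)"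
      using fib[of L'] L' by auto
    define \<rho> where "\<rho> = shiftp n \<pi>n ((C + ((\<tau> ^^ L') 0 + b) div m) mod n)"
    have \<rho>_perm: "\<rho> permutes {..<n}" unfolding \<rho>_def by (rule shiftp_permutes[OF \<pi>n(1) n0])
    have \<rho>_cyc: "cyc n \<rho> + tmax n \<le> n" unfolding \<rho>_def by (rule \<pi>n(2)) (use n0 in simp)
    have ret: "(\<sigma> ^^ L) (m * i) = m * \<rho> i" if "i < n" for i
    proof -
      define x where "x = (\<tau> ^^ L') 0 + m * ((i + C) mod n)"
      have tk: "(\<tau> ^^ L') 0 < m" using \<tau>_lt m0 by blast
      have x: "x < N" unfolding x_def using lt_N[OF tk] n0 by simp
      have xm: "x mod m = (\<tau> ^^ L') 0" "x div m = (i + C) mod n" unfolding x_def using tk by auto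
      have z: "\<tau> (x mod m) = 0" using L(2) L' xm by simp
      have "\<sigma> x = \<sigma> x mod m + m * (\<sigma> x div m)" by simp
      also have "\<dots> = m * \<rho> i"
        using F1[OF x] z xm that unfolding \<rho>_def shiftp_def by (simp add: mod_add_left_eq add.assoc mod_add_right_eq)
      finally show ?thesis using C that L' unfolding x_def by simp
    qed
    have retS: "(\<sigma> ^^ (L * s)) (m * i) = m * (\<rho> ^^ s) i" if "i < n" for i s
    proof (induction s)
      case 0 show ?case by simp
    next
      case (Suc s)
      have "(\<sigma> ^^ (L * Suc s)) (m * i) = (\<sigma> ^^ L) ((\<sigma> ^^ (L * s)) (m * i))"
        by (simp add: funpow_add)
      also have "\<dots> = m * (\<rho> ^^ Suc s) i" using Suc ret permutes_in_funpow_image[OF \<rho>_perm] that by auto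
      finally show ?case .
    qed
    obtain Rf where Rf: "Rf \<subseteq> {..<n}" "card Rf \<le> cyc n \<rho>" "\<And>i. i < n \<Longrightarrow> \<exists>k. (\<rho> ^^ k) i \<in> Rf"
      using reps_exist[OF \<rho>_perm] by blast
    define R where "R = (\<lambda>(j, i). j + m * i) ` ((R0 - {r0}) \<times> {..<n}) \<union> (\<lambda>i. m * i) ` Rf"
    have finR0: "finite R0" using R0(1) finite_subset by blast
    have finRf: "finite Rf" using Rf(1) finite_subset by blast
    have finR: "finite R" unfolding R_def using finR0 finRf by auto
    have "card R \<le> card ((\<lambda>(j, i). j + m * i) ` ((R0 - {r0}) \<times> {..<n})) + card ((\<lambda>i. m * i) ` Rf)"
      unfolding R_def by (rule card_Un_le)
    also have "\<dots> \<le> card ((R0 - {r0}) \<times> {..<n}) + card Rf"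
      by (intro add_mono card_image_le) (use finR0 finRf in auto)
    also have "\<dots> = (card R0 - 1) * n + card Rf"
      using finR0 k0 unfolding r0_def by (simp add: card_cartesian_product)
    finally have cardR: "card R \<le> (card R0 - 1) * n + card Rf" .
    have "cyc N \<sigma> \<le> card R"
    proof (rule cyc_cover[OF \<sigma>_perm finR])
      fix x assume x: "x < N"
      obtain k where k: "(\<tau> ^^ k) (x mod m) \<in> R0" using R0(3)[of "x mod m"] m0 by auto
      define y where "y = (\<sigma> ^^ k) x"
      have y: "y < N" "y mod m = (\<tau> ^^ k) (x mod m)" using iter[OF x] unfolding y_def by auto
      show "\<exists>k. (\<sigma> ^^ k) x \<in> R"
      proof (cases "(\<tau> ^^ k) (x mod m) = r0")
        case False
        have "y = y mod m + m * (y div m)" by simp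
        moreover have "y div m < n" using div_lt_mult y(1) unfolding N_def by blast
        ultimately have "y \<in> R" unfolding R_def using y k False by (auto intro!: image_eqI[of _ _ "(y mod m, y div m)"])
        thus ?thesis unfolding y_def by blast
      next
        case True
        define z where "z = (\<sigma> ^^ k1) y"
        have z: "z < N" "z mod m = 0" using iter[OF y(1), of k1] y(2) True k1 unfolding z_def by auto
        define i where "i = z div m"
        have i: "i < n" "z = m * i"
        proof -
          have "z = m * (z div m) + z mod m" by simp
          thus "i < n" "z = m * i" using div_lt_mult[of z n m] z unfolding N_def i_def by simp_all
        qed
        obtain s where s: "(\<rho> ^^ s) i \<in> Rf" using Rf(3) i by blast
        have "(\<sigma> ^^ (L * s)) z \<in> R" using retS[OF i(1)] i(2) s unfolding R_def by auto
        hence "(\<sigma> ^^ (L * s + k1 + k)) x \<in> R" unfolding z_def y_def by (simp add: funpow_add)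
        thus ?thesis by blast
      qed
    qed
    moreover have "card R0 + tmax m \<le> m" using R0(2) \<pi>m(2)[of "b mod m"] m0 unfolding \<tau>_def by simp
    moreover have "card Rf + tmax n \<le> n" using Rf(2) \<rho>_cyc by simp
    ultimately have "cyc N \<sigma> \<le> (card R0 - 1) * n + card Rf" using cardR by simp
    also have "\<dots> \<le> (m - tmax m - 1) * n + (n - tmax n)"
      using \<open>card R0 + tmax m \<le> m\<close> \<open>card Rf + tmax n \<le> n\<close>
      by (intro add_mono mult_le_mono1) auto
    finally show ?thesis unfolding \<sigma>_def .
  qed
  hence "N - ((m - tmax m - 1) * n + (n - tmax n)) \<le> tmax N" by (intro tmax_ge[OF N0 \<pi>_perm])
  moreover have "tmax m + 1 \<le> m"
  proof -
    have "cyc m (shiftp m \<pi>m 0) + tmax m \<le> m" using \<pi>m(2) m0 by blast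
    moreover have "cyc m (shiftp m \<pi>m 0) \<ge> 1"
    proof -
      have "orb (shiftp m \<pi>m 0) ` {..<m} \<noteq> {}" using m0 by auto
      hence "0 < card (orb (shiftp m \<pi>m 0) ` {..<m})" by (simp add: card_gt_0_iff)
      thus ?thesis unfolding cyc_orb by simp
    qed
    ultimately show ?thesis by linarith
  qed
  moreover have "tmax n \<le> n"
    using \<pi>n(2)[of 0] n0 by linarith
  ultimately show ?thesis unfolding N_def
  proof -
    assume a: "n * m - ((m - tmax m - 1) * n + (n - tmax n)) \<le> tmax (n * m)"
      "tmax m + 1 \<le> m" "tmax n \<le> n"
    have "n * m - ((m - tmax m - 1) * n + (n - tmax n)) = n * tmax m + tmax n"
      using arith1[OF a(2,3)] .
    thus ?thesis using a(1) by simp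
  qed
qed


lemma fibG_cong:
  "\<exists>d. \<forall>y. [int (fibG q b mm tt U k y) = (\<Prod>l<k. int (mm (U l))) * int y + d] (mod int q)"
proof (induction k)
  case 0 show ?case by (intro exI[of _ 0]) simp
next
  case (Suc k)
  then obtain d where d: "\<forall>y. [int (fibG q b mm tt U k y) = (\<Prod>l<k. int (mm (U l))) * int y + d] (mod int q)"
    by blast
  define P where "P = (\<Prod>l<k. int (mm (U l)))"
  have "[int (fibG q b mm tt U (Suc k) y) = (\<Prod>l<Suc k. int (mm (U l))) * int y
          + (int (mm (U k)) * (d + int b) + int (tt (U k)))] (mod int q)" for y
  proof -
    have "int (fibG q b mm tt U (Suc k) y) = (int (mm (U k)) * ((int (fibG q b mm tt U k y) + int b) mod int q) + int (tt (U k))) mod int q"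
      by (simp add: zmod_int)
    hence "[int (fibG q b mm tt U (Suc k) y) = int (mm (U k)) * ((int (fibG q b mm tt U k y) + int b) mod int q) + int (tt (U k))] (mod int q)"
      by (simp add: cong_def)
    also have "[int (mm (U k)) * ((int (fibG q b mm tt U k y) + int b) mod int q) + int (tt (U k))
        = int (mm (U k)) * ((P * int y + d) + int b) + int (tt (U k))] (mod int q)"
    proof (intro cong_add cong_mult cong_refl)
      have "[(int (fibG q b mm tt U k y) + int b) mod int q = int (fibG q b mm tt U k y) + int b] (mod int q)"
        by (simp add: cong_def)
      also have "[int (fibG q b mm tt U k y) + int b = (P * int y + d) + int b] (mod int q)"
        using d unfolding P_def by (intro cong_add cong_refl) blast
      finally show "[(int (fibG q b mm tt U k y) + int b) mod int q = P * int y + d + int b] (mod int q)" .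
    qed
    also have "int (mm (U k)) * ((P * int y + d) + int b) + int (tt (U k)) =
        (\<Prod>l<Suc k. int (mm (U l))) * int y + (int (mm (U k)) * (d + int b) + int (tt (U k)))"
      unfolding P_def by (simp add: algebra_simps)
    finally show ?thesis .
  qed
  thus ?case by blast
qed

lemma U_bij:
  assumes p: "prime p" and a: "residue_primroot p a"
  shows "bij_betw (\<lambda>l. ((x0 + a ^ l) mod p + b) mod p) {..<p - 1} ({..<p} - {(x0 + b) mod p})"
proof -
  have p0: "0 < p" using p prime_gt_0_nat by blast
  define U where "U l = ((x0 + a ^ l) mod p + b) mod p" for l
  have Ucong: "[U l = (x0 + b) + a ^ l] (mod p)" for l
  proof -
    have "U l = (x0 + a ^ l + b) mod p" unfolding U_def by (simp add: mod_add_left_eq)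
    also have "x0 + a ^ l + b = (x0 + b) + a ^ l" by simp
    finally show ?thesis by (simp add: cong_def)
  qed
  have inj: "inj_on U {..<p - 1}"
  proof
    fix i j assume ij: "i \<in> {..<p - 1}" "j \<in> {..<p - 1}" "U i = U j"
    have "[(x0 + b) + a ^ i = U i] (mod p)" using Ucong[of i] by (rule cong_sym)
    hence "[(x0 + b) + a ^ i = (x0 + b) + a ^ j] (mod p)"
      using Ucong[of j] ij(3) cong_trans by simp
    hence "[a ^ i = a ^ j] (mod p)" by (simp add: cong_add_lcancel_nat)
    hence "[i = j] (mod (p - 1))" using primroot_pow_eq_iff[OF p a] by blast
    thus "i = j" using ij by (simp add: cong_def)
  qed
  have sub: "U ` {..<p - 1} \<subseteq> {..<p} - {(x0 + b) mod p}"
  proof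
    fix u assume "u \<in> U ` {..<p - 1}"
    then obtain l where l: "u = U l" by auto
    have "u < p" unfolding l U_def using p0 by simp
    moreover have "u \<noteq> (x0 + b) mod p"
    proof
      assume "u = (x0 + b) mod p"
      hence "[U l = (x0 + b) + 0] (mod p)" using l by (simp add: cong_def)
      hence "[(x0 + b) + a ^ l = (x0 + b) + 0] (mod p)" using Ucong[of l] cong_sym cong_trans by blast
      hence "[a ^ l = 0] (mod p)" using cong_add_lcancel_nat by blast
      thus False using primroot_pow_not_dvd[OF p a] by (simp add: cong_0_iff)
    qed
    ultimately show "u \<in> {..<p} - {(x0 + b) mod p}" by simp
  qed
  have "card (U ` {..<p - 1}) = card ({..<p} - {(x0 + b) mod p})"
    using card_image[OF inj] p0 by simp
  hence "U ` {..<p - 1} = {..<p} - {(x0 + b) mod p}" using sub by (intro card_subset_eq) auto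
  thus ?thesis using inj unfolding bij_betw_def U_def by simp
qed

lemma crt_perm_permutes:
  fixes p q a :: nat and mm tt :: "nat \<Rightarrow> nat"
  assumes p: "prime p" and q: "prime q" and pq: "p \<noteq> q" and a: "coprime a p"
    and mm: "\<And>u. coprime (mm u) q"
  shows "crt_perm p q a mm tt permutes {..<p * q}"
proof -
  have p0: "0 < p" and q0: "0 < q" using p q prime_gt_0_nat by auto
  have cop: "coprime p q" using p(1) q pq by (simp add: primes_coprime)
  define N where "N = p * q"
  define \<pi> where "\<pi> = crt_perm p q a mm tt"
  have crtp: "crt p q A B < N" "crt p q A B mod p = A" "crt p q A B mod q = B" if "A < p" "B < q" for A B
    using crt[OF cop p0 q0 that] unfolding N_def by auto
  have uniq: "x = y" if "x < N" "y < N" "x mod p = y mod p" "x mod q = y mod q" for x y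
    using crt_unique[OF cop p0 q0] that unfolding N_def by blast
  have ap: "coprime a p" using a .
  have "\<pi> permutes {..<N}"
  proof (rule inj_imp_permutes)
    show "inj_on \<pi> {..<N}"
    proof
      fix x y assume xy: "x \<in> {..<N}" "y \<in> {..<N}" "\<pi> x = \<pi> y"
      define Ax where "Ax = a * (x mod p) mod p"
      define Bx where "Bx = (mm (x mod p) * (x mod q) + tt (x mod p)) mod q"
      define Ay where "Ay = a * (y mod p) mod p"
      define By where "By = (mm (y mod p) * (y mod q) + tt (y mod p)) mod q"
      have e: "crt p q Ax Bx = crt p q Ay By" using xy unfolding \<pi>_def crt_perm_def Ax_def Bx_def Ay_def By_def N_def by auto
      have "Ax = Ay" using crtp(2)[of Ax Bx] crtp(2)[of Ay By] e p0 q0 unfolding Ax_def Bx_def Ay_def By_def by auto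
      hence "[a * (x mod p) = a * (y mod p)] (mod p)" unfolding Ax_def Ay_def cong_def .
      hence xp: "x mod p = y mod p" using cong_mult_lcancel_nat[OF ap] p0 by (simp add: cong_def)
      have "Bx = By" using crtp(3)[of Ax Bx] crtp(3)[of Ay By] e p0 q0 unfolding Ax_def Bx_def Ay_def By_def by auto
      hence "[mm (x mod p) * (x mod q) + tt (x mod p) = mm (x mod p) * (y mod q) + tt (x mod p)] (mod q)"
        unfolding Bx_def By_def cong_def xp .
      hence "[mm (x mod p) * (x mod q) = mm (x mod p) * (y mod q)] (mod q)" by (simp add: cong_add_rcancel_nat)
      hence "x mod q = y mod q" using cong_mult_lcancel_nat[OF mm] q0 by (simp add: cong_def)
      thus "x = y" using uniq xy xp by auto
    qed
    show "\<pi> x \<in> {..<N}" if "x \<in> {..<N}" for x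
      using that crtp p0 q0 unfolding \<pi>_def crt_perm_def N_def by auto
    show "\<pi> x = x" if "x \<notin> {..<N}" for x using that unfolding \<pi>_def crt_perm_def N_def by auto
  qed simp
  thus ?thesis unfolding \<pi>_def N_def .
qed

lemma caseC:
  assumes p: "prime p" and q: "prime q" and q5: "5 \<le> q" and qp: "q < p"
  shows "p * q - 5 \<le> tmax (p * q)"
proof -
  have p2: "2 < p" using q5 qp by simp
  have p0: "0 < p" and q0: "0 < q" using p2 q5 by auto
  obtain a where a: "residue_primroot p a" using prime_primitive_root_exists[OF _ p] p2 by auto
  obtain g where g: "residue_primroot q g" using prime_primitive_root_exists[OF _ q] q5 by auto
  define n2 where "n2 = (q - 1) - (p - 3) mod (q - 1)"
  have n2p: "n2 \<le> p" unfolding n2_def using qp by linarith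
  have n2c: "[p + n2 = 3] (mod (q - 1))"
  proof -
    define t where "t = (p - 3) div (q - 1)"
    define r where "r = (p - 3) mod (q - 1)"
    have h1: "p - 3 = (q - 1) * t + r" unfolding t_def r_def by simp
    have h2: "r < q - 1" unfolding r_def using q5 by simp
    have "p + n2 = (q - 1) * t + (q - 1) + 3" unfolding n2_def r_def[symmetric] using h1 h2 p2
      by linarith
    also have "\<dots> = 3 + (q - 1) * Suc t" using mult_Suc_right[of "q - 1" t] by linarith
    finally have eq: "p + n2 = 3 + (q - 1) * Suc t" .
    show ?thesis unfolding cong_def eq by (rule mod_mult_self2)
  qed
  define e where "e u = (if u < n2 then 2 else 1::nat)" for u
  define mm where "mm u = g ^ e u" for u
  define tt where "tt (u::nat) = (0::nat)" for u
  have gq: "coprime g q" using primroot_basic(1)[OF q g] by (simp add: coprime_commute)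
  have mm: "coprime (mm u) q" for u unfolding mm_def using gq by simp
  define \<pi> where "\<pi> = crt_perm p q a mm tt"
  have \<pi>_perm: "\<pi> permutes {..<p * q}" unfolding \<pi>_def
    by (rule crt_perm_permutes[OF p q _ _ mm]) (use qp primroot_basic(1)[OF p a] in \<open>auto simp: coprime_commute\<close>)
  have "cyc (p * q) (shiftp (p * q) \<pi> b) \<le> 5" if b: "b < p * q" for b
  proof -
    obtain x0 where x0: "x0 < p" and main: "\<forall>R1 R2. finite R1 \<longrightarrow> finite R2 \<longrightarrow>
     (\<forall>y<q. \<exists>k. ((\<lambda>y. (mm ((x0 + b) mod p) * ((y + b) mod q) + tt ((x0 + b) mod p)) mod q) ^^ k) y \<in> R1) \<longrightarrow>
     (\<forall>y<q. \<exists>k. (fibG q b mm tt (\<lambda>l. ((x0 + a ^ l) mod p + b) mod p) (p - 1) ^^ k) y \<in> R2) \<longrightarrow>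
     cyc (p * q) (shiftp (p * q) (crt_perm p q a mm tt) b) \<le> card R1 + card R2"
      using crt_skew[where mm=mm and tt=tt and b=b and a=a, OF p p2 q _ a mm b] qp by blast
    define u0 where "u0 = (x0 + b) mod p"
    define U where "U l = ((x0 + a ^ l) mod p + b) mod p" for l
    have e12: "e u0 = 1 \<or> e u0 = 2" unfolding e_def by auto
    obtain R1 where R1: "finite R1" "card R1 \<le> e u0 + 1"
      "\<forall>y<q. \<exists>k. ((\<lambda>y. (mm u0 * ((y + b) mod q) + tt u0) mod q) ^^ k) y \<in> R1"
    proof -
      have "\<exists>R. finite R \<and> card R \<le> e u0 + 1 \<and> (\<forall>y<q. \<exists>k. ((\<lambda>y. (mm u0 * ((y + b) mod q) + tt u0) mod q) ^^ k) y \<in> R)"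
      proof (rule mult_reach[OF q g])
        show "0 < e u0" using e12 by auto
        show "\<not> q - 1 dvd e u0" using e12 q5 by (auto dest: dvd_imp_le)
        fix y assume y: "y < q"
        have "[(mm u0 * ((y + b) mod q) + tt u0) mod q = g ^ e u0 * (y + b)] (mod q)"
          unfolding mm_def tt_def cong_def by (simp add: mod_mult_right_eq)
        hence "[int ((mm u0 * ((y + b) mod q) + tt u0) mod q) = int (g ^ e u0 * (y + b))] (mod int q)"
          using cong_int_iff by blast
        thus "(mm u0 * ((y + b) mod q) + tt u0) mod q < q \<and>
          [int ((mm u0 * ((y + b) mod q) + tt u0) mod q) = int g ^ e u0 * int y + int g ^ e u0 * int b] (mod int q)"
          using q0 by (simp add: algebra_simps)
      qed
      thus ?thesis using that by blast
    qed
    define e' where "e' = 3 - e u0"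
    have e'12: "e' = 1 \<or> e' = 2" unfolding e'_def using e12 by auto
    have S: "(\<Sum>l<p - 1. e (U l)) = p + n2 - e u0"
    proof -
      have "(\<Sum>l<p - 1. e (U l)) = (\<Sum>u\<in>{..<p} - {u0}. e u)"
        using sum.reindex_bij_betw[OF U_bij[OF p a, of x0 b], of e] unfolding U_def u0_def by simp
      also have "\<dots> = (\<Sum>u<p. e u) - e u0" using x0 p0 unfolding u0_def
        by (subst sum_diff1_nat) auto
      also have "(\<Sum>u<p. e u) = p + n2"
      proof -
        have "(\<Sum>u<p. e u) = (\<Sum>u\<in>{0..<n2}. e u) + (\<Sum>u\<in>{n2..<p}. e u)"
          using sum.atLeastLessThan_concat[of 0 n2 p e] n2p by (simp add: lessThan_atLeast0)
        also have "(\<Sum>u\<in>{0..<n2}. e u) = (\<Sum>u\<in>{0..<n2}. 2)" unfolding e_def by (intro sum.cong) auto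
        also have "(\<Sum>u\<in>{n2..<p}. e u) = (\<Sum>u\<in>{n2..<p}. 1)" unfolding e_def by (intro sum.cong) auto
        also have "(\<Sum>u\<in>{0..<n2}. 2) + (\<Sum>u\<in>{n2..<p}. 1) = 2 * n2 + (p - n2)" by simp
        also have "\<dots> = p + n2" using n2p by simp
        finally show ?thesis by simp
      qed
      finally show ?thesis .
    qed
    have Se: "[(\<Sum>l<p - 1. e (U l)) = e'] (mod (q - 1))"
    proof -
      have "p + n2 - e u0 + e u0 = p + n2" using e12 p2 by auto
      hence "[(p + n2 - e u0) + e u0 = 3] (mod (q - 1))" using n2c by simp
      moreover have "3 = e' + e u0" unfolding e'_def using e12 by auto
      ultimately have "[(p + n2 - e u0) + e u0 = e' + e u0] (mod (q - 1))" by simp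
      hence "[p + n2 - e u0 = e'] (mod (q - 1))" by (simp add: cong_add_rcancel_nat)
      thus ?thesis using S by simp
    qed
    obtain R2 where R2: "finite R2" "card R2 \<le> e' + 1"
      "\<forall>y<q. \<exists>k. (fibG q b mm tt U (p - 1) ^^ k) y \<in> R2"
    proof -
      obtain d where d: "\<forall>y. [int (fibG q b mm tt U (p - 1) y) = (\<Prod>l<p - 1. int (mm (U l))) * int y + d] (mod int q)"
        using fibG_cong by blast
      have P: "[(\<Prod>l<p - 1. int (mm (U l))) = int g ^ e'] (mod int q)"
      proof -
        have "(\<Prod>l<p - 1. int (mm (U l))) = int (g ^ (\<Sum>l<p - 1. e (U l)))"
          unfolding mm_def by (simp add: power_sum)
        moreover have "[g ^ (\<Sum>l<p - 1. e (U l)) = g ^ e'] (mod q)"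
          using primroot_pow_eq_iff[OF q g] Se by blast
        ultimately show ?thesis using cong_int_iff by (metis of_nat_power)
      qed
      have "\<exists>R. finite R \<and> card R \<le> e' + 1 \<and> (\<forall>y<q. \<exists>k. (fibG q b mm tt U (p - 1) ^^ k) y \<in> R)"
      proof (rule mult_reach[OF q g])
        show "0 < e'" using e'12 by auto
        show "\<not> q - 1 dvd e'" using e'12 q5 by (auto dest: dvd_imp_le)
        fix y assume y: "y < q"
        have "fibG q b mm tt U (p - 1) y < q" using q0 p2 by (cases "p - 1") auto
        moreover have "[int (fibG q b mm tt U (p - 1) y) = int g ^ e' * int y + d] (mod int q)"
        proof -
          have "[(\<Prod>l<p - 1. int (mm (U l))) * int y + d = int g ^ e' * int y + d] (mod int q)"
            by (intro cong_add cong_mult cong_refl P)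
          thus ?thesis using d cong_trans by blast
        qed
        ultimately show "fibG q b mm tt U (p - 1) y < q \<and> [int (fibG q b mm tt U (p - 1) y) = int g ^ e' * int y + d] (mod int q)"
          by blast
      qed
      thus ?thesis using that by blast
    qed
    have "cyc (p * q) (shiftp (p * q) (crt_perm p q a mm tt) b) \<le> card R1 + card R2"
      using main R1 R2 unfolding u0_def U_def by blast
    also have "\<dots> \<le> 5" using R1(2) R2(2) e12 unfolding e'_def by auto
    finally show ?thesis unfolding \<pi>_def .
  qed
  hence "p * q - 5 \<le> tmax (p * q)" using tmax_ge[OF _ \<pi>_perm] p0 q0 by simp
  thus ?thesis .
qed


lemma primroot_log_gen:
  assumes m: "1 < m" and g: "residue_primroot m g" and z: "coprime z (int m)"
  shows "\<exists>k. [int g ^ k = z] (mod int m)"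
proof -
  define w where "w = nat (z mod int m)"
  have wz: "int w = z mod int m" unfolding w_def using m by simp
  have "coprime (z mod int m) (int m)" using coprime_mod_left_iff[of "int m" z] m z by linarith
  hence "coprime (int w) (int m)" unfolding wz .
  hence cw: "coprime w m" by simp
  have "w \<noteq> 0"
  proof
    assume "w = 0"
    hence "coprime 0 m" using cw by simp
    thus False using m by simp
  qed
  moreover have "w < m"
  proof -
    have "z mod int m < int m" using m by simp
    thus ?thesis using wz by linarith
  qed
  ultimately have "w \<in> totatives m" using cw by (auto simp: totatives_def)
  hence "w \<in> (\<lambda>i. g ^ i mod m) ` {..<totient m}"
    using residue_primroot_is_generator[OF m g] unfolding bij_betw_def by simp
  then obtain k where "g ^ k mod m = w" by auto
  hence "int (g ^ k mod m) = int w" by simp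
  hence "int (g ^ k) mod int m = z mod int m" unfolding zmod_int wz .
  hence "[int (g ^ k) = z] (mod int m)" unfolding cong_def .
  hence "[int g ^ k = z] (mod int m)" by (simp only: of_nat_power)
  thus ?thesis ..
qed

lemma caseA:
  assumes p: "prime p" and p2: "2 < p"
  shows "p * p - 3 \<le> tmax (p * p)"
proof -
  obtain g where g: "\<forall>k>0. residue_primroot (p ^ k) g"
    using residue_primroot_odd_prime_power_exists[of p] p p2 by (metis prime_odd_nat)
  define N where "N = p * p"
  have gN: "residue_primroot N g" using g[rule_format, of 2] unfolding N_def by (simp add: power2_eq_square)
  have gp: "residue_primroot p g" using g[rule_format, of 1] by simp
  have p0: "0 < p" using p2 by simp
  have N1: "1 < N" unfolding N_def using less_1_mult[of p p] p2 by linarith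
  have N0: "0 < N" using N1 by simp
  have cgN: "coprime g N" using gN by (simp add: residue_primroot_def coprime_commute)
  define \<pi> where "\<pi> x = (if x < N then g * x mod N else x)" for x
  have \<pi>_perm: "\<pi> permutes {..<N}"
  proof (rule inj_imp_permutes)
    show "inj_on \<pi> {..<N}"
    proof
      fix x y assume xy: "x \<in> {..<N}" "y \<in> {..<N}" "\<pi> x = \<pi> y"
      hence "[g * x = g * y] (mod N)" unfolding \<pi>_def cong_def by auto
      hence "[x = y] (mod N)" using cong_mult_lcancel_nat[OF cgN] by blast
      thus "x = y" using xy by (simp add: cong_def)
    qed
    show "\<pi> x \<in> {..<N}" if "x \<in> {..<N}" for x using that N0 unfolding \<pi>_def by auto
    show "\<pi> x = x" if "x \<notin> {..<N}" for x using that unfolding \<pi>_def by auto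
  qed simp
  have cg1: "coprime (int g - 1) (int N)"
  proof -
    have "coprime (int g - 1) (int p)" using primroot_ne1[OF p p2 gp] .
    thus ?thesis unfolding N_def by simp
  qed
  have "cyc N (shiftp N \<pi> b) \<le> 3" if b: "b < N" for b
  proof -
    define \<sigma> where "\<sigma> = shiftp N \<pi> b"
    have \<sigma>_perm: "\<sigma> permutes {..<N}" unfolding \<sigma>_def by (rule shiftp_permutes[OF \<pi>_perm N0])
    have \<sigma>: "\<sigma> y < N \<and> [int (\<sigma> y) = int g * int y + int g * int b] (mod int N)" if "y < N" for y
    proof -
      have "\<sigma> y = g * ((y + b) mod N) mod N" unfolding \<sigma>_def shiftp_def \<pi>_def using that N0 by simp
      hence "[\<sigma> y = g * (y + b)] (mod N)" unfolding cong_def by (simp add: mod_mult_right_eq)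
      hence "[int (\<sigma> y) = int (g * (y + b))] (mod int N)" using cong_int_iff by blast
      moreover have "\<sigma> y < N" unfolding \<sigma>_def shiftp_def \<pi>_def using that N0 by simp
      ultimately show ?thesis by (simp add: algebra_simps)
    qed
    obtain y0 where y0: "y0 < N" "[int g * int y0 + int g * int b = int y0] (mod int N)"
      using affine_fixpt[OF N0 cg1] by blast
    have it: "(\<sigma> ^^ k) y < N \<and> [int ((\<sigma> ^^ k) y) = int y0 + int g ^ k * (int y - int y0)] (mod int N)"
      if "y < N" for y k
      using affine_iter[of N \<sigma> "int g" "int g * int b" "int y0" y k] \<sigma> y0(2) that by blast
    define R where "R = {y0, (y0 + 1) mod N, (y0 + p) mod N}"
    have hit: "\<exists>k. (\<sigma> ^^ k) r = x" if "r < N" "x < N" "[int y0 + int g ^ k * (int r - int y0) = int x] (mod int N)" for r x k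
    proof -
      have "[int ((\<sigma> ^^ k) r) = int x] (mod int N)" using it[OF that(1), of k] that(3) by (blast intro: cong_trans)
      hence "(\<sigma> ^^ k) r = x" using cong_lt_eq it[OF that(1), of k] that(2) by blast
      thus ?thesis by blast
    qed
    have "cyc N \<sigma> \<le> card R"
    proof (rule cyc_cover2[OF \<sigma>_perm])
      show "finite R" unfolding R_def by simp
      show "R \<subseteq> {..<N}" unfolding R_def using y0 N0 by auto
      fix x assume x: "x < N"
      define z where "z = int x - int y0"
      show "\<exists>r\<in>R. \<exists>k. (\<sigma> ^^ k) r = x"
      proof (cases "int N dvd z")
        case True
        hence "[int x = int y0] (mod int N)" unfolding z_def by (simp add: cong_iff_dvd_diff)
        hence "x = y0" using cong_lt_eq x y0(1) by blast
        thus ?thesis unfolding R_def by (intro bexI[of _ y0] exI[of _ 0]) auto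
      next
        case False
        show ?thesis
        proof (cases "int p dvd z")
          case False
          have "prime (int p)" using p by simp
          hence "coprime (int p) z" using False prime_imp_coprime by blast
          hence "coprime z (int p)" by (simp add: coprime_commute)
          hence "coprime z (int N)" unfolding N_def by simp
          then obtain k where k: "[int g ^ k = z] (mod int N)" using primroot_log_gen[OF N1 gN] by blast
          define r where "r = (y0 + 1) mod N"
          have r: "r < N" "[int r - int y0 = 1] (mod int N)"
          proof -
            show "r < N" unfolding r_def using N0 by simp
            have "[int r = int y0 + 1] (mod int N)" unfolding r_def by (simp add: cong_def zmod_int add.commute)
            hence "[int r - int y0 = (int y0 + 1) - int y0] (mod int N)" by (intro cong_diff cong_refl)
            thus "[int r - int y0 = 1] (mod int N)" by simp
          qed
          have "[int y0 + int g ^ k * (int r - int y0) = int y0 + z * 1] (mod int N)"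
            by (intro cong_add cong_mult cong_refl k r(2))
          hence "[int y0 + int g ^ k * (int r - int y0) = int x] (mod int N)" unfolding z_def by simp
          thus ?thesis using hit[OF r(1) x] unfolding R_def r_def by blast
        next
          case True
          then obtain w where w: "z = int p * w" by (elim dvdE)
          have "\<not> int p dvd w"
          proof
            assume "int p dvd w"
            hence "int N dvd z" unfolding w N_def by simp
            thus False using \<open>\<not> int N dvd z\<close> by simp
          qed
          then obtain k where k: "[int g ^ k = w] (mod int p)" using primroot_log_int[OF p gp] by blast
          have k': "[int p * int g ^ k = int p * w] (mod int N)"
          proof -
            have "int p dvd (int g ^ k - w)" using k by (simp add: cong_iff_dvd_diff)
            hence "int p * int p dvd int p * (int g ^ k - w)" by simp
            thus ?thesis unfolding N_def by (simp add: cong_iff_dvd_diff algebra_simps)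
          qed
          define r where "r = (y0 + p) mod N"
          have r: "r < N" "[int r - int y0 = int p] (mod int N)"
          proof -
            show "r < N" unfolding r_def using N0 by simp
            have "[int r = int y0 + int p] (mod int N)" unfolding r_def by (simp add: cong_def zmod_int add.commute)
            hence "[int r - int y0 = (int y0 + int p) - int y0] (mod int N)" by (intro cong_diff cong_refl)
            thus "[int r - int y0 = int p] (mod int N)" by simp
          qed
          have "[int y0 + int g ^ k * (int r - int y0) = int y0 + int g ^ k * int p] (mod int N)"
            by (intro cong_add cong_mult cong_refl r(2))
          also have "int g ^ k * int p = int p * int g ^ k" by simp
          also have "[int y0 + int p * int g ^ k = int y0 + int p * w] (mod int N)"
            by (intro cong_add cong_refl k')
          finally have c: "[int y0 + int g ^ k * (int r - int y0) = int y0 + int p * w] (mod int N)" .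
          have "int y0 + int p * w = int x" using w unfolding z_def by simp
          hence "[int y0 + int g ^ k * (int r - int y0) = int x] (mod int N)" using c by simp
          thus ?thesis using hit[OF r(1) x] unfolding R_def r_def by blast
        qed
      qed
    qed
    also have "card R \<le> 3" unfolding R_def by (simp add: card_insert_le_m1 card_insert_if)
    finally show ?thesis unfolding \<sigma>_def .
  qed
  hence "N - 3 \<le> tmax N" using tmax_ge[OF N0 \<pi>_perm] by blast
  thus ?thesis unfolding N_def .
qed


definition dlog :: "nat \<Rightarrow> nat \<Rightarrow> nat \<Rightarrow> nat" where
  "dlog p a z = inv_into {..<p - 1} (\<lambda>k. a ^ k mod p) (z mod p)"

definition chi :: "nat \<Rightarrow> nat \<Rightarrow> nat \<Rightarrow> nat \<Rightarrow> nat \<Rightarrow> nat" where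
  "chi p q a c z = (if z mod p = 0 then 0 else c ^ dlog p a z mod q)"

context
  fixes p q a c :: nat
  assumes p: "prime p" and q: "prime q" and a: "residue_primroot p a" and c: "residue_primroot q c"
    and qp: "(q - 1) dvd (p - 1)" and q2: "2 < q"
begin

lemma p0: "0 < p"
  using p prime_gt_0_nat by blast

lemma q0: "0 < q"
  using q prime_gt_0_nat by blast

lemma dlog_props:
  assumes "\<not> p dvd z"
  shows "dlog p a z < p - 1 \<and> [a ^ dlog p a z = z] (mod p)"
proof -
  have p1: "1 < p" using p prime_gt_1_nat by blast
  have "z mod p \<noteq> 0" using assms by (simp add: dvd_eq_mod_eq_0)
  hence "z mod p \<in> {0<..<p}" using p0 by simp
  hence "z mod p \<in> totatives p" using totatives_prime[OF p] by simp
  moreover have "(\<lambda>k. a ^ k mod p) ` {..<totient p} = totatives p"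
    using residue_primroot_is_generator[OF p1 a] unfolding bij_betw_def by blast
  ultimately have im: "z mod p \<in> (\<lambda>k. a ^ k mod p) ` {..<p - 1}"
    using totient_prime[OF p] by simp
  have "dlog p a z \<in> {..<p - 1}" unfolding dlog_def by (rule inv_into_into[OF im])
  moreover have "a ^ dlog p a z mod p = z mod p" unfolding dlog_def using f_inv_into_f[OF im] by simp
  ultimately show ?thesis unfolding cong_def by simp
qed

lemma c_pow_cong:
  assumes "[i = j] (mod (p - 1))"
  shows "[c ^ i = c ^ j] (mod q)"
proof -
  have "[i = j] (mod (q - 1))" using cong_dvd_modulus_nat[OF assms qp] .
  thus ?thesis using primroot_pow_eq_iff[OF q c] by blast
qed

lemma chi_log:
  assumes "[a ^ i = z] (mod p)"
  shows "[chi p q a c z = c ^ i] (mod q)"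
proof -
  have nz: "\<not> p dvd z"
  proof
    assume "p dvd z"
    hence "p dvd a ^ i" using cong_dvd_iff[OF assms] by blast
    thus False using primroot_pow_not_dvd[OF p a] by blast
  qed
  define j where "j = dlog p a z"
  have j: "[a ^ j = z] (mod p)" using dlog_props[OF nz] unfolding j_def by blast
  have "[a ^ j = a ^ i] (mod p)" using cong_trans[OF j cong_sym[OF assms]] .
  hence "[j = i] (mod (p - 1))" using primroot_pow_eq_iff[OF p a] by blast
  hence "[c ^ j = c ^ i] (mod q)" by (rule c_pow_cong)
  moreover have "chi p q a c z = c ^ j mod q" unfolding chi_def j_def using nz by (simp add: dvd_eq_mod_eq_0)
  ultimately show ?thesis by (simp add: cong_def)
qed

lemma chi_zero: "p dvd z \<Longrightarrow> chi p q a c z = 0"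
  unfolding chi_def by (simp add: dvd_eq_mod_eq_0)

lemma chi_mod: "chi p q a c (z mod p) = chi p q a c z"
  unfolding chi_def dlog_def by simp

lemma chi_cong: "[z = z'] (mod p) \<Longrightarrow> chi p q a c z = chi p q a c z'"
  by (metis chi_mod cong_def)

lemma chi_mult: "[chi p q a c (a ^ k * s) = c ^ k * chi p q a c s] (mod q)"
proof (cases "p dvd s")
  case True
  then show ?thesis using chi_zero by simp
next
  case False
  define i where "i = dlog p a s"
  have i: "[a ^ i = s] (mod p)" using dlog_props[OF False] unfolding i_def by blast
  have "[a ^ (k + i) = a ^ k * s] (mod p)" using cong_mult[OF cong_refl i, of "a ^ k"] by (simp add: power_add)
  hence "[chi p q a c (a ^ k * s) = c ^ (k + i)] (mod q)" by (rule chi_log)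
  moreover have "[c ^ k * c ^ i = c ^ k * chi p q a c s] (mod q)"
    using cong_mult[OF cong_refl chi_log[OF i], of "c ^ k"] by (simp add: cong_sym)
  ultimately show ?thesis unfolding power_add by (rule cong_trans)
qed

lemma chi_pow_nz: "\<not> int q dvd int (chi p q a c (a ^ k))"
proof
  assume "int q dvd int (chi p q a c (a ^ k))"
  hence d: "q dvd chi p q a c (a ^ k)" by (simp only: int_dvd_int_iff)
  have "[chi p q a c (a ^ k) = c ^ k] (mod q)" by (rule chi_log[OF cong_refl])
  hence "q dvd c ^ k" using cong_dvd_iff d by blast
  thus False using primroot_pow_not_dvd[OF q c] by blast
qed

lemma aff_bij:
  assumes s: "\<not> p dvd s"
  shows "bij_betw (\<lambda>j. (a ^ j * s + w) mod p) {..<p - 1} ({..<p} - {w mod p})"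
proof -
  define h where "h j = (a ^ j * s + w) mod p" for j
  have "coprime p s" using s p prime_imp_coprime by blast
  hence cs: "coprime s p" by (simp add: coprime_commute)
  have inj: "inj_on h {..<p - 1}"
  proof
    fix i j assume ij: "i \<in> {..<p - 1}" "j \<in> {..<p - 1}" "h i = h j"
    have "[a ^ i * s + w = a ^ j * s + w] (mod p)" using ij(3) unfolding h_def cong_def .
    hence "[a ^ i * s = a ^ j * s] (mod p)" by (simp add: cong_add_rcancel_nat)
    hence "[a ^ i = a ^ j] (mod p)" using cong_mult_rcancel_nat[OF cs] by blast
    hence "[i = j] (mod (p - 1))" using primroot_pow_eq_iff[OF p a] by blast
    thus "i = j" using ij by (simp add: cong_def)
  qed
  have sub: "h ` {..<p - 1} \<subseteq> {..<p} - {w mod p}"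
  proof
    fix u assume "u \<in> h ` {..<p - 1}"
    then obtain l where l: "u = h l" by auto
    have "u < p" unfolding l h_def using p0 by simp
    moreover have "u \<noteq> w mod p"
    proof
      assume "u = w mod p"
      hence "[a ^ l * s + w = 0 + w] (mod p)" unfolding l h_def cong_def by simp
      hence "[a ^ l * s = 0] (mod p)" using cong_add_rcancel_nat by blast
      hence "p dvd a ^ l * s" by (simp add: cong_0_iff)
      hence "p dvd a ^ l \<or> p dvd s" using p prime_dvd_mult_iff by blast
      thus False using s primroot_pow_not_dvd[OF p a] by blast
    qed
    ultimately show "u \<in> {..<p} - {w mod p}" by simp
  qed
  have "card (h ` {..<p - 1}) = card ({..<p} - {w mod p})"
    using card_image[OF inj] p0 by simp
  hence "h ` {..<p - 1} = {..<p} - {w mod p}" using sub by (intro card_subset_eq) auto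
  thus ?thesis using inj unfolding bij_betw_def h_def by simp
qed

lemma geom_zero: "int q dvd (\<Sum>j<p - 1. int c ^ j)"
proof -
  have "[c ^ (p - 1) = c ^ 0] (mod q)" by (rule c_pow_cong) (simp add: cong_def)
  hence "[int (c ^ (p - 1)) = int (c ^ 0)] (mod int q)" using cong_int_iff by blast
  hence "[int c ^ (p - 1) = 1] (mod int q)" by simp
  hence "int q dvd (int c ^ (p - 1) - 1)" by (simp add: cong_iff_dvd_diff)
  hence d: "int q dvd (int c - 1) * (\<Sum>j<p - 1. int c ^ j)" by (simp add: power_diff_1_eq)
  have "\<not> [c ^ 1 = c ^ 0] (mod q)"
  proof
    assume "[c ^ 1 = c ^ 0] (mod q)"
    hence "[1 = 0] (mod (q - 1))" using primroot_pow_eq_iff[OF q c] by blast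
    hence "q - 1 dvd 1" by (simp add: cong_def)
    thus False using q2 by simp
  qed
  hence "\<not> [int (c ^ 1) = int (c ^ 0)] (mod int q)" using cong_int_iff by blast
  hence "\<not> [int c = 1] (mod int q)" by simp
  hence "\<not> int q dvd (int c - 1)" by (simp add: cong_iff_dvd_diff)
  moreover have "prime (int q)" using q by simp
  ultimately show ?thesis using d prime_dvd_mult_iff by blast
qed

lemma chi_sum: "int q dvd (\<Sum>z<p. int (chi p q a c z))"
proof -
  define f where "f z = int (chi p q a c z)" for z
  have f0: "f 0 = 0" unfolding f_def using chi_zero[of 0] by simp
  have A: "(\<Sum>z\<in>{..<p} - {0}. f z) = (\<Sum>z<p. f z) - f 0"
    using sum_diff1[of "{..<p}" f 0] p0 by simp
  have nd1: "\<not> p dvd 1" using prime_gt_1_nat[OF p] by simp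
  have B: "(\<Sum>j<p - 1. f ((a ^ j * 1 + 0) mod p)) = (\<Sum>z\<in>{..<p} - {0 mod p}. f z)"
    by (rule sum.reindex_bij_betw[OF aff_bij[OF nd1]])
  have C: "[(\<Sum>j<p - 1. f ((a ^ j * 1 + 0) mod p)) = (\<Sum>j<p - 1. int c ^ j)] (mod int q)"
  proof (rule cong_sum)
    fix j
    have "[chi p q a c ((a ^ j * 1 + 0) mod p) = c ^ j] (mod q)" by (rule chi_log) (simp add: cong_def)
    hence "[int (chi p q a c ((a ^ j * 1 + 0) mod p)) = int (c ^ j)] (mod int q)"
      using cong_int_iff by blast
    thus "[f ((a ^ j * 1 + 0) mod p) = int c ^ j] (mod int q)" unfolding f_def by simp
  qed
  have "(\<Sum>z<p. f z) = (\<Sum>j<p - 1. f ((a ^ j * 1 + 0) mod p))" using A B f0 by simp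
  hence "[(\<Sum>z<p. f z) = (\<Sum>j<p - 1. int c ^ j)] (mod int q)" using C by simp
  hence "int q dvd (\<Sum>z<p. f z)" using geom_zero cong_dvd_iff by blast
  thus ?thesis unfolding f_def .
qed

lemma F_dvd:
  assumes "p dvd s"
  shows "(\<Sum>j<p - 1. int (chi p q a c (a ^ j * s + w))) = int (p - 1) * int (chi p q a c w)"
proof -
  have "chi p q a c (a ^ j * s + w) = chi p q a c w" for j
  proof (rule chi_cong)
    have "[a ^ j * s = 0] (mod p)" using assms by (simp add: cong_0_iff)
    thus "[a ^ j * s + w = w] (mod p)" using cong_add[OF _ cong_refl, of "a ^ j * s" 0 p w] by simp
  qed
  thus ?thesis by simp
qed

lemma F_ndvd:
  assumes "\<not> p dvd s"
  shows "[(\<Sum>j<p - 1. int (chi p q a c (a ^ j * s + w))) = - int (chi p q a c w)] (mod int q)"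
proof -
  define f where "f z = int (chi p q a c z)" for z
  have "(\<Sum>j<p - 1. f (a ^ j * s + w)) = (\<Sum>j<p - 1. f ((a ^ j * s + w) mod p))"
    unfolding f_def chi_mod ..
  also have "\<dots> = (\<Sum>z\<in>{..<p} - {w mod p}. f z)"
    by (rule sum.reindex_bij_betw[OF aff_bij[OF assms]])
  also have "\<dots> = (\<Sum>z<p. f z) - f (w mod p)"
    using sum_diff1[of "{..<p}" f "w mod p"] p0 by simp
  also have "f (w mod p) = f w" unfolding f_def chi_mod ..
  finally have e: "(\<Sum>j<p - 1. f (a ^ j * s + w)) = (\<Sum>z<p. f z) - f w" .
  have "[(\<Sum>z<p. f z) = 0] (mod int q)" using chi_sum unfolding f_def by (simp add: cong_0_iff)
  hence "[(\<Sum>z<p. f z) - f w = 0 - f w] (mod int q)" by (intro cong_diff cong_refl)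
  thus ?thesis using e unfolding f_def by simp
qed

lemma weighted:
  "[(\<Sum>l<p - 1. int c ^ (p - 2 - l) * int (chi p q a c (a ^ l + s)))
     = (\<Sum>j<p - 1. int (chi p q a c (a ^ j * s + a ^ (p - 2))))] (mod int q)"
proof -
  have "[(\<Sum>l<p - 1. int c ^ (p - 2 - l) * int (chi p q a c (a ^ l + s)))
     = (\<Sum>l<p - 1. int (chi p q a c (a ^ (p - 1 - Suc l) * s + a ^ (p - 2))))] (mod int q)"
  proof (rule cong_sum)
    fix l assume l: "l \<in> {..<p - 1}"
    have "[chi p q a c (a ^ (p - 2 - l) * (a ^ l + s)) = c ^ (p - 2 - l) * chi p q a c (a ^ l + s)] (mod q)"
      by (rule chi_mult)
    moreover have "a ^ (p - 2 - l) * (a ^ l + s) = a ^ (p - 1 - Suc l) * s + a ^ (p - 2)"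
    proof -
      have "p - 2 - l + l = p - 2" using l by simp
      hence "a ^ (p - 2 - l) * a ^ l = a ^ (p - 2)" by (metis power_add)
      moreover have "p - 1 - Suc l = p - 2 - l" by simp
      ultimately show ?thesis by (simp add: algebra_simps)
    qed
    ultimately have "[c ^ (p - 2 - l) * chi p q a c (a ^ l + s) = chi p q a c (a ^ (p - 1 - Suc l) * s + a ^ (p - 2))] (mod q)"
      by (simp add: cong_sym)
    hence "[int (c ^ (p - 2 - l) * chi p q a c (a ^ l + s)) = int (chi p q a c (a ^ (p - 1 - Suc l) * s + a ^ (p - 2)))] (mod int q)"
      using cong_int_iff by blast
    thus "[int c ^ (p - 2 - l) * int (chi p q a c (a ^ l + s)) = int (chi p q a c (a ^ (p - 1 - Suc l) * s + a ^ (p - 2)))] (mod int q)"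
      by simp
  qed
  also have "(\<Sum>l<p - 1. int (chi p q a c (a ^ (p - 1 - Suc l) * s + a ^ (p - 2))))
      = (\<Sum>j<p - 1. int (chi p q a c (a ^ j * s + a ^ (p - 2))))"
    by (rule sum.nat_diff_reindex)
  finally show ?thesis .
qed

end


lemma cong_ndvd: "[(x::int) = y] (mod m) \<Longrightarrow> \<not> m dvd y \<Longrightarrow> \<not> m dvd x"
  using cong_dvd_iff by blast

lemma caseB:
  assumes p: "prime p" and q: "prime q" and q2: "2 < q" and pq: "p \<noteq> q" and qp: "(q - 1) dvd (p - 1)"
  shows "p * q - 3 \<le> tmax (p * q)"
proof -
  have p1: "1 < p" using p prime_gt_1_nat by blast
  have "q - 1 \<le> p - 1" using qp p1 by (intro dvd_imp_le) auto
  hence qltp: "q < p" using pq q2 by linarith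
  hence p2: "2 < p" using q2 by linarith
  have p0: "0 < p" and q0: "0 < q" using p1 q2 by auto
  obtain a where a: "residue_primroot p a" using prime_primitive_root_exists[OF p1 p] by auto
  obtain c where c: "residue_primroot q c" using prime_primitive_root_exists[OF _ q] q2 by auto
  define ch where "ch = chi p q a c"
  define lam where "lam = (if q dvd (p - 1) then 1 else 0::nat)"
  define T where "T u = ch u + lam * ch (u + p - 1)" for u
  define mm where "mm (u::nat) = c" for u
  have cq: "coprime c q" using primroot_basic(1)[OF q c] by (simp add: coprime_commute)
  have mm: "coprime (mm u) q" for u unfolding mm_def using cq .
  define \<pi> where "\<pi> = crt_perm p q a mm T"
  have \<pi>_perm: "\<pi> permutes {..<p * q}" unfolding \<pi>_def
    by (rule crt_perm_permutes[OF p q pq _ mm]) (use primroot_basic(1)[OF p a] in \<open>simp add: coprime_commute\<close>)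
  have cpow: "[c ^ (p - 1) = 1] (mod q)"
  proof -
    have "[p - 1 = 0] (mod (q - 1))" using qp by (simp add: cong_0_iff)
    hence "[c ^ (p - 1) = c ^ 0] (mod q)" using primroot_pow_eq_iff[OF q c] by blast
    thus ?thesis by simp
  qed
  have "cyc (p * q) (shiftp (p * q) \<pi> b) \<le> 3" if b: "b < p * q" for b
  proof -
    obtain x0 where x0: "x0 < p" and main: "\<forall>R1 R2. finite R1 \<longrightarrow> finite R2 \<longrightarrow>
     (\<forall>y<q. \<exists>k. ((\<lambda>y. (mm ((x0 + b) mod p) * ((y + b) mod q) + T ((x0 + b) mod p)) mod q) ^^ k) y \<in> R1) \<longrightarrow>
     (\<forall>y<q. \<exists>k. (fibG q b mm T (\<lambda>l. ((x0 + a ^ l) mod p + b) mod p) (p - 1) ^^ k) y \<in> R2) \<longrightarrow>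
     cyc (p * q) (shiftp (p * q) (crt_perm p q a mm T) b) \<le> card R1 + card R2"
      using crt_skew[where mm=mm and tt=T and b=b and a=a, OF p p2 q pq a mm b] by blast
    define u0 where "u0 = (x0 + b) mod p"
    define U where "U l = ((x0 + a ^ l) mod p + b) mod p" for l
    obtain R1 where R1: "finite R1" "card R1 \<le> 1 + 1"
      "\<forall>y<q. \<exists>k. ((\<lambda>y. (mm u0 * ((y + b) mod q) + T u0) mod q) ^^ k) y \<in> R1"
    proof -
      have "\<exists>R. finite R \<and> card R \<le> 1 + 1 \<and> (\<forall>y<q. \<exists>k. ((\<lambda>y. (mm u0 * ((y + b) mod q) + T u0) mod q) ^^ k) y \<in> R)"
      proof (rule mult_reach[OF q c])
        show "0 < (1::nat)" by simp
        show "\<not> q - 1 dvd 1" using q2 by simp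
        fix y assume y: "y < q"
        have "(mm u0 * ((y + b) mod q) + T u0) mod q = ((c * ((y + b) mod q)) mod q + T u0) mod q"
          unfolding mm_def by (simp add: mod_add_left_eq)
        also have "(c * ((y + b) mod q)) mod q = (c * (y + b)) mod q" by (simp add: mod_mult_right_eq)
        also have "((c * (y + b)) mod q + T u0) mod q = (c * (y + b) + T u0) mod q" by (simp add: mod_add_left_eq)
        finally have e1: "(mm u0 * ((y + b) mod q) + T u0) mod q = (c * (y + b) + T u0) mod q" .
        have e2: "c * (y + b) + T u0 = c ^ 1 * y + (c * b + T u0)" by (simp add: algebra_simps)
        have "[(mm u0 * ((y + b) mod q) + T u0) mod q = c ^ 1 * y + (c * b + T u0)] (mod q)"
          unfolding cong_def e1 e2 by simp
        hence "[int ((mm u0 * ((y + b) mod q) + T u0) mod q) = int (c ^ 1 * y + (c * b + T u0))] (mod int q)"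
          using cong_int_iff by blast
        thus "(mm u0 * ((y + b) mod q) + T u0) mod q < q \<and>
          [int ((mm u0 * ((y + b) mod q) + T u0) mod q) = int c ^ 1 * int y + int (c * b + T u0)] (mod int q)"
          using q0 by simp
      qed
      thus ?thesis using that by blast
    qed
    define X where "X l = int c * int b + int (T (U l))" for l
    have closed: "[int (fibG q b mm T U k y) = int c ^ k * int y + (\<Sum>l<k. int c ^ (k - 1 - l) * X l)] (mod int q)" for k y
    proof (induction k)
      case 0 show ?case by simp
    next
      case (Suc k)
      define G where "G = fibG q b mm T U k y"
      define Sk where "Sk = (\<Sum>l<k. int c ^ (k - 1 - l) * X l)"
      have "int (fibG q b mm T U (Suc k) y) = (int c * ((int G + int b) mod int q) + int (T (U k))) mod int q"
        unfolding G_def mm_def by (simp add: zmod_int)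
      hence "[int (fibG q b mm T U (Suc k) y) = int c * ((int G + int b) mod int q) + int (T (U k))] (mod int q)"
        by (simp add: cong_def)
      also have "[int c * ((int G + int b) mod int q) + int (T (U k)) = int c * ((int c ^ k * int y + Sk) + int b) + int (T (U k))] (mod int q)"
      proof (intro cong_add cong_mult cong_refl)
        have "[(int G + int b) mod int q = int G + int b] (mod int q)" by (simp add: cong_def)
        also have "[int G + int b = (int c ^ k * int y + Sk) + int b] (mod int q)"
          using Suc.IH unfolding G_def Sk_def by (intro cong_add cong_refl)
        finally show "[(int G + int b) mod int q = int c ^ k * int y + Sk + int b] (mod int q)" .
      qed
      also have "int c * ((int c ^ k * int y + Sk) + int b) + int (T (U k)) = int c ^ Suc k * int y + (int c * Sk + X k)"
        unfolding X_def by (simp add: algebra_simps)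
      also have "int c * Sk + X k = (\<Sum>l<Suc k. int c ^ (Suc k - 1 - l) * X l)"
      proof -
        have "int c * Sk = (\<Sum>l<k. int c ^ (Suc k - 1 - l) * X l)" unfolding Sk_def sum_distrib_left
        proof (intro sum.cong refl)
          fix l assume "l \<in> {..<k}"
          hence "Suc k - 1 - l = Suc (k - 1 - l)" by auto
          thus "int c * (int c ^ (k - 1 - l) * X l) = int c ^ (Suc k - 1 - l) * X l" by simp
        qed
        thus ?thesis by simp
      qed
      finally show ?case .
    qed
    define D where "D = (\<Sum>l<p - 1. int c ^ (p - 2 - l) * X l)"
    have ret: "fibG q b mm T U (p - 1) y < q \<and> [int (fibG q b mm T U (p - 1) y) = int y + D] (mod int q)" for y
    proof
      show "fibG q b mm T U (p - 1) y < q" using q0 p2 by (cases "p - 1") auto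
      have e: "p - 1 - 1 - l = p - 2 - l" for l by simp
      have "[int (fibG q b mm T U (p - 1) y) = int c ^ (p - 1) * int y + D] (mod int q)"
        using closed[of "p - 1" y] unfolding D_def e .
      also have "[int c ^ (p - 1) * int y + D = 1 * int y + D] (mod int q)"
      proof (intro cong_add cong_mult cong_refl)
        have "[int (c ^ (p - 1)) = int 1] (mod int q)" using cpow cong_int_iff by blast
        thus "[int c ^ (p - 1) = 1] (mod int q)" by simp
      qed
      finally show "[int (fibG q b mm T U (p - 1) y) = int y + D] (mod int q)" by simp
    qed
    define w where "w = a ^ (p - 2)"
    define Fs where "Fs s = (\<Sum>j<p - 1. int (ch (a ^ j * s + w)))" for s
    define Cw where "Cw = int (ch w)"
    have Cw: "\<not> int q dvd Cw" unfolding Cw_def ch_def w_def by (rule chi_pow_nz[OF p q a c qp q2])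
    have Fd: "Fs s = int (p - 1) * Cw" if "p dvd s" for s
      unfolding Fs_def Cw_def ch_def by (rule F_dvd[OF p q a c qp q2 that])
    have Fn: "[Fs s = - Cw] (mod int q)" if "\<not> p dvd s" for s
      unfolding Fs_def Cw_def ch_def by (rule F_ndvd[OF p q a c qp q2 that])
    have W: "[(\<Sum>l<p - 1. int c ^ (p - 2 - l) * int (ch (a ^ l + s))) = Fs s] (mod int q)" for s
      unfolding Fs_def ch_def w_def by (rule weighted[OF p q a c qp q2])
    have Ucong: "[U l = a ^ l + u0] (mod p)" for l
    proof -
      have "U l = (x0 + a ^ l + b) mod p" unfolding U_def by (simp add: mod_add_left_eq)
      also have "x0 + a ^ l + b = a ^ l + (x0 + b)" by simp
      finally show ?thesis unfolding u0_def by (simp add: cong_def mod_add_right_eq)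
    qed
    have chU1: "ch (U l) = ch (a ^ l + u0)" for l
      unfolding ch_def by (rule chi_cong[OF p q a c qp q2 Ucong])
    have chU2: "ch (U l + p - 1) = ch (a ^ l + (u0 + p - 1))" for l
    proof -
      have "[U l + (p - 1) = (a ^ l + u0) + (p - 1)] (mod p)" by (intro cong_add Ucong cong_refl)
      hence "[U l + p - 1 = a ^ l + (u0 + p - 1)] (mod p)" using p1 by (simp add: algebra_simps)
      thus ?thesis unfolding ch_def by (rule chi_cong[OF p q a c qp q2])
    qed
    define S0 where "S0 = (\<Sum>l<p - 1. int c ^ (p - 2 - l))"
    define S1 where "S1 = (\<Sum>l<p - 1. int c ^ (p - 2 - l) * int (ch (a ^ l + u0)))"
    define S2 where "S2 = (\<Sum>l<p - 1. int c ^ (p - 2 - l) * int (ch (a ^ l + (u0 + p - 1))))"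
    have Dsplit: "D = int c * int b * S0 + S1 + int lam * S2"
      unfolding D_def S0_def S1_def S2_def X_def T_def chU1 chU2
      by (simp add: sum.distrib sum_distrib_left algebra_simps)
    have S0: "int q dvd S0"
    proof -
      have "S0 = (\<Sum>l<p - 1. int c ^ (p - 1 - Suc l))" unfolding S0_def by (intro sum.cong) auto
      also have "\<dots> = (\<Sum>j<p - 1. int c ^ j)" by (rule sum.nat_diff_reindex)
      finally show ?thesis using geom_zero[OF p q a c qp q2] by simp
    qed
    have Dc: "[D = Fs u0 + int lam * Fs (u0 + p - 1)] (mod int q)"
    proof -
      have "[int c * int b * S0 = 0] (mod int q)" using S0 by (simp add: cong_0_iff)
      hence "[D = 0 + S1 + int lam * S2] (mod int q)" unfolding Dsplit by (intro cong_add cong_refl)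
      also have "[0 + S1 + int lam * S2 = Fs u0 + int lam * Fs (u0 + p - 1)] (mod int q)"
        unfolding add_0_left S1_def S2_def by (intro cong_add cong_mult cong_refl W)
      finally show ?thesis .
    qed
    have Dnz: "\<not> int q dvd D"
    proof (cases "q dvd (p - 1)")
      case False
      hence l0: "lam = 0" unfolding lam_def by simp
      show ?thesis
      proof (cases "p dvd u0")
        case True
        have "\<not> int q dvd int (p - 1) * Cw"
        proof
          assume "int q dvd int (p - 1) * Cw"
          hence "int q dvd int (p - 1) \<or> int q dvd Cw" using q prime_dvd_mult_iff[of "int q"] by simp
          moreover have "\<not> int q dvd int (p - 1)" using False by (simp add: int_dvd_int_iff)
          ultimately show False using Cw by blast
        qed
        moreover have "[D = int (p - 1) * Cw] (mod int q)" using Dc l0 Fd[OF True] by simp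
        ultimately show ?thesis using cong_ndvd by blast
      next
        case False
        have "\<not> int q dvd - Cw" using Cw by simp
        moreover have "[D = Fs u0] (mod int q)" using Dc l0 by simp
        hence "[D = - Cw] (mod int q)" using Fn[OF False] by (rule cong_trans)
        ultimately show ?thesis using cong_ndvd by blast
      qed
    next
      case True
      hence l1: "lam = 1" unfolding lam_def by simp
      have qd: "int q dvd int (p - 1)" using True by (simp only: int_dvd_int_iff)
      have not_both: "\<not> (p dvd u0 \<and> p dvd (u0 + p - 1))"
      proof
        assume h: "p dvd u0 \<and> p dvd (u0 + p - 1)"
        have "u0 + p - 1 = u0 + (p - 1)" using p1 by simp
        hence "p dvd u0 + (p - 1)" using h by simp
        hence "p dvd p - 1" using h dvd_add_right_iff by blast
        moreover have "0 < p - 1" using p1 by simp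
        ultimately have "p \<le> p - 1" by (rule dvd_imp_le)
        thus False using p1 by simp
      qed
      have "[Fs u0 + Fs (u0 + p - 1) = - Cw] (mod int q) \<or> [Fs u0 + Fs (u0 + p - 1) = - Cw + - Cw] (mod int q)"
      proof (cases "p dvd u0")
        case True
        hence n2: "\<not> p dvd (u0 + p - 1)" using not_both by blast
        have "[Fs u0 = 0] (mod int q)" using Fd[OF True] qd by (simp add: cong_0_iff)
        hence "[Fs u0 + Fs (u0 + p - 1) = 0 + - Cw] (mod int q)" by (intro cong_add Fn[OF n2])
        thus ?thesis by simp
      next
        case False
        show ?thesis
        proof (cases "p dvd (u0 + p - 1)")
          case True
          have "[Fs (u0 + p - 1) = 0] (mod int q)" using Fd[OF True] qd by (simp add: cong_0_iff)
          hence "[Fs u0 + Fs (u0 + p - 1) = - Cw + 0] (mod int q)" by (intro cong_add Fn[OF False])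
          thus ?thesis by simp
        next
          case n2: False
          have "[Fs u0 + Fs (u0 + p - 1) = - Cw + - Cw] (mod int q)" by (intro cong_add Fn[OF False] Fn[OF n2])
          thus ?thesis by simp
        qed
      qed
      moreover have "\<not> int q dvd - Cw" using Cw by simp
      moreover have "\<not> int q dvd (- Cw + - Cw)"
      proof
        assume "int q dvd (- Cw + - Cw)"
        moreover have "- Cw + - Cw = - (2 * Cw)" by simp
        ultimately have "int q dvd 2 * Cw" by (metis dvd_minus_iff)
        hence "int q dvd 2 \<or> int q dvd Cw" using q prime_dvd_mult_iff[of "int q"] by simp
        moreover have "\<not> int q dvd 2" using q2 by (auto dest: zdvd_imp_le)
        ultimately show False using Cw by blast
      qed
      moreover have DD: "[D = Fs u0 + Fs (u0 + p - 1)] (mod int q)" using Dc l1 by simp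
      ultimately show ?thesis using cong_ndvd[OF cong_trans[OF DD]] by blast
    qed
    have R2: "\<forall>y<q. \<exists>k. (fibG q b mm T U (p - 1) ^^ k) y \<in> {0}"
      using transl_reach[OF q Dnz ret] by simp
    have "cyc (p * q) (shiftp (p * q) (crt_perm p q a mm T) b) \<le> card R1 + card {0::nat}"
      using main R1 R2 unfolding u0_def U_def by blast
    also have "\<dots> \<le> 3" using R1(2) by simp
    finally show ?thesis unfolding \<pi>_def .
  qed
  hence "p * q - 3 \<le> tmax (p * q)" using tmax_ge[OF _ \<pi>_perm] p0 q0 by simp
  thus ?thesis .
qed


lemma nat_sub_int: "(a::nat) - k \<le> t \<Longrightarrow> int a - int k \<le> int t"
  by linarith

lemma three:
  assumes p: "prime p" and q: "prime q" and p3: "3 \<le> p" and q3: "3 \<le> q" and d: "(q - 1) dvd (p - 1)"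
  shows "p * q - 3 \<le> tmax (p * q)"
proof (cases "p = q")
  case True
  then show ?thesis using caseA[OF p] p3 by simp
next
  case False
  then show ?thesis using caseB[OF p q _ False d] q3 by simp
qed

lemma five:
  assumes p: "prime p" and q: "prime q" and p3: "3 \<le> p" and q3: "3 \<le> q"
  shows "p * q - 5 \<le> tmax (p * q)"
proof -
  have podd: "odd p" using prime_odd_nat[OF p] p3 by simp
  have qodd: "odd q" using prime_odd_nat[OF q] q3 by simp
  show ?thesis
  proof (cases "(q - 1) dvd (p - 1)")
    case True
    then show ?thesis using three[OF p q p3 q3] by linarith
  next
    case nd1: False
    show ?thesis
    proof (cases "(p - 1) dvd (q - 1)")
      case True
      then show ?thesis using three[OF q p q3 p3] by (simp add: mult.commute)
    next
      case nd2: False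
      have pq: "p \<noteq> q" using nd1 by auto
      have "q \<noteq> 3"
      proof
        assume "q = 3"
        hence "(q - 1) dvd (p - 1)" using podd by presburger
        thus False using nd1 by simp
      qed
      hence q5: "5 \<le> q" using q3 qodd by presburger
      have "p \<noteq> 3"
      proof
        assume "p = 3"
        hence "(p - 1) dvd (q - 1)" using qodd by presburger
        thus False using nd2 by simp
      qed
      hence p5: "5 \<le> p" using p3 podd by presburger
      show ?thesis
      proof (cases "q < p")
        case True
        then show ?thesis using caseC[OF p q q5] by simp
      next
        case False
        hence "p < q" using pq by simp
        then show ?thesis using caseC[OF q p p5] by (simp add: mult.commute)
      qed
    qed
  qed
qed

theorem theorem1p4:
  shows "(\<forall>n m :: nat. n \<ge> 2 \<longrightarrow> m \<ge> 2 \<longrightarrow> tmax (n * m) \<ge> n * tmax m + tmax n)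
    \<and> (\<forall>p q :: nat. prime p \<longrightarrow> prime q \<longrightarrow> p \<ge> 3 \<longrightarrow> q \<ge> 3 \<longrightarrow>
          int (tmax (p * q)) \<ge> int (p * q) - 5
        \<and> ((q - 1) dvd (p - 1) \<longrightarrow> int (tmax (p * q)) \<ge> int (p * q) - 3))"
proof (intro conjI allI impI)
  fix n m :: nat assume "n \<ge> 2" "m \<ge> 2"
  thus "tmax (n * m) \<ge> n * tmax m + tmax n" using part1 by blast
next
  fix p q :: nat assume p: "prime p" and q: "prime q" and p3: "p \<ge> 3" and q3: "q \<ge> 3"
  show "int (tmax (p * q)) \<ge> int (p * q) - 5"
    using nat_sub_int[OF five[OF p q p3 q3]] by simp
  assume "(q - 1) dvd (p - 1)"
  thus "int (tmax (p * q)) \<ge> int (p * q) - 3"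
    using nat_sub_int[OF three[OF p q p3 q3]] by simp
qed


end
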